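(* Let $N>p\geq1$, $K\geq1$, and consider the model $\mathbf{Y}=\mathbf{U}\mathbf{S}+\mathbf{N}$, where $\mathbf{Y}\in\mathbb{R}^{N\times K}$ is observed, $\mathbf{U}\in\mathbb{R}^{N\times p}$ satisfies $\mathbf{U}^T\mathbf{U}=\mathbf{I}_p$, $\mathbf{S}\in\mathbb{R}^{p\times K}$, and, conditionally on $\mathbf{U},\mathbf{S}$, the columns of $\mathbf{N}$ are i.i.d. Gaussian with zero mean and known covariance $\sigma_n^2\mathbf{I}_N$. Assume the (improper) prior $\pi(\mathbf{S})\propto 1$ on $\mathbf{S}$ and the Bingham prior $\pi(\mathbf{U})\propto \mathrm{etr}(\kappa\,\mathbf{U}^T\bar{\mathbf{U}}\bar{\mathbf{U}}^T\mathbf{U})$ on $\mathbf{U}$ (with respect to the uniform measure on $\{\mathbf{U}:\mathbf{U}^T\mathbf{U}=\mathbf{I}_p\}$), where $\kappa>0$ and $\bar{\mathbf{U}}\in\mathbb{R}^{N\times p}$ satisfies $\bar{\mathbf{U}}^T\bar{\mathbf{U}}=\mathbf{I}_p$. Then the posterior distribution of $\mathbf{U}$ given $\mathbf{Y}$ is the Bingham distribution $p(\mathbf{U}\mid\mathbf{Y})\propto\mathrm{etr}\big(\mathbf{U}^T[\kappa\bar{\mathbf{U}}\bar{\mathbf{U}}^T+\tfrac{1}{2\sigma_n^2}\mathbf{Y}\mathbf{Y}^T]\mathbf{U}\big)$, and the MMSD estimator of $\mathbf{U}$, i.e. the matrix of $p$ orthonormal eigenvectors associated with the $p$ largest eigenvalues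 of $\int\mathbf{U}\mathbf{U}^Tp(\mathbf{U}\mid\mathbf{Y})\,d\mathbf{U}$, is given by the $p$ orthonormal eigenvectors associated with the $p$ largest eigenvalues of $\kappa\bar{\mathbf{U}}\bar{\mathbf{U}}^T+\frac{1}{2\sigma_n^2}\mathbf{Y}\mathbf{Y}^T$.
   Context: $\mathrm{etr}(\mathbf{X})=\exp(\mathrm{Tr}(\mathbf{X}))$. A Bingham distribution with symmetric parameter matrix $\mathbf{A}$ on $\{\mathbf{U}\in\mathbb{R}^{N\times p}:\mathbf{U}^T\mathbf{U}=\mathbf{I}_p\}$ has density proportional to $\mathrm{etr}(\mathbf{U}^T\mathbf{A}\mathbf{U})$ with respect to the uniform (Haar) measure. *)

theory Defs
  imports "HOL-Analysis.Analysis" "HOL-Probability.Probability"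
begin

text \<open>Matrices are type-indexed: an N x p matrix is real^'p^'n (rows indexed by 'n,
  columns by 'p), with N = CARD('n), p = CARD('p), K = CARD('k).\<close>

definition etr :: "real^'n^'n \<Rightarrow> real" where
  "etr X = exp (trace X)"

definition stiefel :: "(real^'p^'n) set" where
  "stiefel = {U. transpose U ** U = mat 1}"

text \<open>Uniform (Haar) measure on the Stiefel manifold: the (unique) Borel probability
  measure concentrated on the Stiefel manifold and invariant under left multiplication
  by orthogonal N x N matrices.\<close>
definition stiefel_uniform :: "(real^'p^'n) measure \<Rightarrow> bool" where
  "stiefel_uniform \<mu> \<longleftrightarrow>
     prob_space \<mu> \<and> sets \<mu> = sets borel \<and> emeasure \<mu> stiefel = 1 \<and>
     (\<forall>Q::real^'n^'n. orthogonal_matrix Q \<longrightarrow> distr \<mu> borel (\<lambda>U. Q ** U) = \<mu>)"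

definition bingham_density :: "(real^'p^'n) measure \<Rightarrow> real^'n^'n \<Rightarrow> real^'p^'n \<Rightarrow> real" where
  "bingham_density \<mu> A U = etr (transpose U ** A ** U) / (\<integral>V. etr (transpose V ** A ** V) \<partial>\<mu>)"

text \<open>Likelihood p(Y | U, S) of the model Y = U S + N, the K columns of N i.i.d.
  Gaussian N(0, sigma^2 I_N). The Frobenius norm is the norm of real^'k^'n.\<close>
definition likelihood :: "real \<Rightarrow> real^'k^'n \<Rightarrow> real^'p^'n \<Rightarrow> real^'k^'p \<Rightarrow> real" where
  "likelihood \<sigma> Y U S =
     (2 * pi * \<sigma>\<^sup>2) powr (- real (CARD('n) * CARD('k)) / 2) *
     exp (- (norm (Y - U ** S))\<^sup>2 / (2 * \<sigma>\<^sup>2))"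

text \<open>Marginal likelihood p(Y | U) under the improper flat prior pi(S) = 1 (Lebesgue).\<close>
definition marginal_likelihood :: "real \<Rightarrow> real^'k^'n \<Rightarrow> real^'p^'n \<Rightarrow> real" where
  "marginal_likelihood \<sigma> Y U = (\<integral>S. likelihood \<sigma> Y U S \<partial>lborel)"

definition posterior_density ::
  "(real^'p^'n) measure \<Rightarrow> (real^'p^'n \<Rightarrow> real) \<Rightarrow> real \<Rightarrow> real^'k^'n \<Rightarrow> real^'p^'n \<Rightarrow> real" where
  "posterior_density \<mu> prior \<sigma> Y U =
     prior U * marginal_likelihood \<sigma> Y U /
     (\<integral>V. prior V * marginal_likelihood \<sigma> Y V \<partial>\<mu>)"

definition posterior_mean_proj ::
  "(real^'p^'n) measure \<Rightarrow> (real^'p^'n \<Rightarrow> real) \<Rightarrow> real \<Rightarrow> real^'k^'n \<Rightarrow> real^'n^'n" where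
  "posterior_mean_proj \<mu> prior \<sigma> Y =
     (\<integral>U. posterior_density \<mu> prior \<sigma> Y U *\<^sub>R (U ** transpose U) \<partial>\<mu>)"

definition top_eigvecs :: "real^'n^'n \<Rightarrow> real^'p^'n \<Rightarrow> bool" where
  "top_eigvecs M V \<longleftrightarrow>
     transpose V ** V = mat 1 \<and>
     (\<exists>lam::real^'p.
        (\<forall>i. M *v column i V = lam $ i *\<^sub>R column i V) \<and>
        (\<forall>x c. x \<noteq> 0 \<longrightarrow> M *v x = c *\<^sub>R x \<longrightarrow> transpose V *v x = 0 \<longrightarrow>
               (\<forall>i. c \<le> lam $ i)))"

end

theory Submission
  imports Defs
begin


lemma inner_mat_mult:
  fixes X :: "real^'k^'n" and U :: "real^'p^'n" and Z :: "real^'k^'p"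
  shows "inner X (U ** Z) = inner (transpose U ** X) Z"
proof -
  have "inner X (U ** Z) = (\<Sum>i\<in>UNIV. \<Sum>j\<in>UNIV. \<Sum>l\<in>UNIV. X$i$j * (U$i$l * Z$l$j))"
    by (simp add: inner_vec_def matrix_matrix_mult_def sum_distrib_left)
  also have "\<dots> = (\<Sum>i\<in>UNIV. \<Sum>l\<in>UNIV. \<Sum>j\<in>UNIV. X$i$j * (U$i$l * Z$l$j))"
    by (rule sum.cong[OF refl], rule sum.swap)
  also have "\<dots> = (\<Sum>l\<in>UNIV. \<Sum>i\<in>UNIV. \<Sum>j\<in>UNIV. X$i$j * (U$i$l * Z$l$j))"
    by (rule sum.swap)
  also have "\<dots> = (\<Sum>l\<in>UNIV. \<Sum>j\<in>UNIV. \<Sum>i\<in>UNIV. X$i$j * (U$i$l * Z$l$j))"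
    by (rule sum.cong[OF refl], rule sum.swap)
  also have "\<dots> = (\<Sum>l\<in>UNIV. \<Sum>j\<in>UNIV. (\<Sum>i\<in>UNIV. U$i$l * X$i$j) * Z$l$j)"
    by (intro sum.cong refl) (simp add: sum_distrib_left sum_distrib_right mult_ac)
  also have "\<dots> = inner (transpose U ** X) Z"
    by (simp add: inner_vec_def matrix_matrix_mult_def transpose_def)
  finally show ?thesis .
qed

lemma norm_sq_trace:
  fixes W :: "real^'k^'p"
  shows "(norm W)^2 = trace (W ** transpose W)"
  by (simp add: power2_norm_eq_inner inner_vec_def trace_def matrix_matrix_mult_def transpose_def)


lemma mm_add_r: "((A::real^'m^'n) + B) ** C = A ** C + B ** C"
  by (simp add: matrix_matrix_mult_def vec_eq_iff sum.distrib ring_distribs)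
lemma mm_diff_l: "(A::real^'m^'n) ** (B - C) = A ** B - A ** C"
  by (simp add: matrix_matrix_mult_def vec_eq_iff sum_subtractf ring_distribs)
lemma mm_diff_r: "((A::real^'m^'n) - B) ** C = A ** C - B ** C"
  by (simp add: matrix_matrix_mult_def vec_eq_iff sum_subtractf ring_distribs)
lemma mm_scale_l: "(k *\<^sub>R (A::real^'m^'n)) ** B = k *\<^sub>R (A ** B)"
  by (simp add: matrix_matrix_mult_def vec_eq_iff sum_distrib_left mult_ac)
lemma mm_scale_r: "(A::real^'m^'n) ** (k *\<^sub>R B) = k *\<^sub>R (A ** B)"
  by (simp add: matrix_matrix_mult_def vec_eq_iff sum_distrib_left mult_ac)
lemma trace_scale: "trace (k *\<^sub>R (A::real^'n^'n)) = k * trace A"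
  by (simp add: trace_def sum_distrib_left)

lemma stiefel_norm_sq:
  fixes U :: "real^'p^'n" and Z :: "real^'k^'p"
  assumes "transpose U ** U = mat 1"
  shows "(norm (U ** Z))^2 = (norm Z)^2"
proof -
  have "(norm (U ** Z))^2 = inner (U ** Z) (U ** Z)" by (simp add: power2_norm_eq_inner)
  also have "\<dots> = inner (transpose U ** (U ** Z)) Z" by (rule inner_mat_mult)
  also have "\<dots> = inner Z Z" by (simp add: matrix_mul_assoc assms)
  finally show ?thesis by (simp add: power2_norm_eq_inner)
qed

lemma decomp:
  fixes U :: "real^'p^'n" and Y :: "real^'k^'n" and S :: "real^'k^'p"
  assumes U: "transpose U ** U = mat 1"
  shows "(norm (Y - U ** S))^2 = (norm Y)^2 - (norm (transpose U ** Y))^2 + (norm (S - transpose U ** Y))^2"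
proof -
  define W where "W = transpose U ** Y"
  have e: "Y - U ** S = (Y - U ** W) + U ** (W - S)" by (simp add: mm_diff_l)
  have o: "inner (Y - U ** W) (U ** (W - S)) = 0"
  proof -
    have "inner (Y - U ** W) (U ** (W - S)) = inner (transpose U ** (Y - U ** W)) (W - S)"
      by (rule inner_mat_mult)
    also have "transpose U ** (Y - U ** W) = 0"
      by (simp add: mm_diff_l matrix_mul_assoc U W_def)
    finally show ?thesis by simp
  qed
  have n1: "(norm (Y - U ** W))^2 = (norm Y)^2 - (norm W)^2"
  proof -
    have "inner Y (U ** W) = inner W W" by (simp add: inner_mat_mult W_def)
    moreover have "inner (U ** W) (U ** W) = inner W W"
      using stiefel_norm_sq[OF U, of W] by (simp add: power2_norm_eq_inner)
    ultimately show ?thesis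
      by (simp add: power2_norm_eq_inner inner_diff_left inner_diff_right inner_commute)
  qed
  have "(norm (Y - U ** S))^2 = (norm (Y - U ** W))^2 + 2 * inner (Y - U ** W) (U ** (W - S)) + (norm (U ** (W - S)))^2"
    unfolding e by (simp add: power2_norm_eq_inner inner_add_left inner_add_right inner_commute)
  also have "\<dots> = (norm Y)^2 - (norm W)^2 + (norm (S - W))^2"
    using o n1 stiefel_norm_sq[OF U, of "W - S"] by (simp add: norm_minus_commute)
  finally show ?thesis by (simp add: W_def)
qed

lemma trace_quad:
  fixes U :: "real^'p^'n" and Y :: "real^'k^'n"
  shows "trace (transpose U ** (Y ** transpose Y) ** U) = (norm (transpose U ** Y))^2"
  by (simp add: norm_sq_trace matrix_transpose_mul matrix_mul_assoc)


lemma AE_False_iff: "(AE x in M. False) \<longleftrightarrow> emeasure M (space M) = 0"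
  by (metis ae_filter_eq_bot_iff trivial_limit_def)


lemma gauss1_integrable:
  fixes c :: real assumes c: "c > 0"
  shows "integrable lborel (\<lambda>t::real. exp (- t\<^sup>2 / c))"
proof -
  define s where "s = sqrt (c / 2)"
  have s2: "2 * s\<^sup>2 = c" using c by (simp add: s_def)
  have sp: "s > 0" using c by (simp add: s_def)
  note sp[simp]
  have "integrable lborel (\<lambda>t. sqrt (2 * pi * s\<^sup>2) * normal_density 0 s t)"
    apply (rule integrable_mult_right) using sp by simp
  moreover have "(\<lambda>t. sqrt (2 * pi * s\<^sup>2) * normal_density 0 s t) = (\<lambda>t::real. exp (- t\<^sup>2 / c))"
    using c s2 sp by (auto simp: normal_density_def fun_eq_iff)
  ultimately show ?thesis by simp
qed

lemma gauss_integrable: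
  fixes c :: real assumes c: "c > 0"
  shows "integrable lborel (\<lambda>x::'a::euclidean_space. exp (- (norm x)\<^sup>2 / c))"
proof (subst integrable_iff_bounded, intro conjI)
  show "(\<lambda>x::'a. exp (- (norm x)\<^sup>2 / c)) \<in> borel_measurable lborel"
    by measurable
  have eq: "exp (- (norm x)\<^sup>2 / c) = (\<Prod>b\<in>Basis. exp (- (x \<bullet> b)\<^sup>2 / c))" for x :: 'a
  proof -
    have "(norm x)\<^sup>2 = (\<Sum>b\<in>Basis. (x \<bullet> b)\<^sup>2)"
      unfolding power2_norm_eq_inner euclidean_inner[of x x] by (simp add: power2_eq_square)
    then have "- (norm x)\<^sup>2 / c = (\<Sum>b\<in>Basis. - (x \<bullet> b)\<^sup>2 / c)"
      by (simp add: sum_divide_distrib sum_negf)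
    then show ?thesis by (simp add: exp_sum)
  qed
  have "(\<integral>\<^sup>+ x. ennreal (norm (exp (- (norm x)\<^sup>2 / c))) \<partial>(lborel::'a measure))
      = (\<integral>\<^sup>+ x. (\<Prod>b\<in>(Basis::'a set). ennreal (exp (- (x \<bullet> b)\<^sup>2 / c))) \<partial>lborel)"
    apply (rule nn_integral_cong)
    apply (subst eq)
    apply (subst prod_ennreal)
    by (auto simp: abs_of_nonneg prod_nonneg)
  also have "\<dots> = (\<Prod>b\<in>(Basis::'a set). (\<integral>\<^sup>+ t. ennreal (exp (- t\<^sup>2 / c)) \<partial>lborel))"
    by (rule nn_integral_lborel_prod) auto
  also have "\<dots> < \<infinity>"
  proof -
    have "(\<integral>\<^sup>+ t. ennreal (exp (- t\<^sup>2 / c)) \<partial>lborel) < \<infinity>"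
      using gauss1_integrable[OF c] unfolding integrable_iff_bounded by simp
    then show ?thesis by (simp add: less_top[symmetric] ennreal_prod_eq_top power_eq_top_ennreal)
  qed
  finally show "(\<integral>\<^sup>+ x. ennreal (norm (exp (- (norm x)\<^sup>2 / c))) \<partial>(lborel::'a measure)) < \<infinity>" .
qed

lemma gauss_pos:
  fixes c :: real assumes c: "c > 0"
  shows "(\<integral>x. exp (- (norm x)\<^sup>2 / c) \<partial>(lborel::'a::euclidean_space measure)) > 0"
proof -
  have i: "integrable lborel (\<lambda>x::'a. exp (- (norm x)\<^sup>2 / c))" by (rule gauss_integrable[OF c])
  have "(\<integral>x. exp (- (norm x)\<^sup>2 / c) \<partial>(lborel::'a measure)) \<ge> 0" by simp
  moreover have "(\<integral>x. exp (- (norm x)\<^sup>2 / c) \<partial>(lborel::'a measure)) \<noteq> 0"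
  proof
    assume "(\<integral>x. exp (- (norm x)\<^sup>2 / c) \<partial>(lborel::'a measure)) = 0"
    then have "AE x in (lborel::'a measure). exp (- (norm x)\<^sup>2 / c) = 0"
      using integral_nonneg_eq_0_iff_AE[OF i] by simp
    then have "AE x in (lborel::'a measure). False" by simp
    then show False by (simp add: AE_False_iff)
  qed
  ultimately show ?thesis by linarith
qed

lemma gauss_shift:
  fixes W :: "'a::euclidean_space"
  assumes that: "f \<in> borel_measurable borel"
  shows "(\<integral>x. f (x - W) \<partial>lborel) = (\<integral>x. (f x :: real) \<partial>lborel)"
proof -
  have "(\<integral>x. f x \<partial>lborel) = (\<integral>x. f x \<partial>(distr lborel borel ((+) (- W))))"
    by (simp add: lborel_distr_plus)
  also have "\<dots> = (\<integral>x. f (- W + x) \<partial>lborel)"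
    using that by (intro integral_distr) auto
  finally show ?thesis by simp
qed


lemma cont_mm[continuous_intros]:
  fixes f :: "'a::topological_space \<Rightarrow> real^'m^'n" and g :: "'a \<Rightarrow> real^'k^'m"
  assumes "continuous_on S f" "continuous_on S g"
  shows "continuous_on S (\<lambda>x. f x ** g x)"
  unfolding matrix_matrix_mult_def
  by (intro continuous_intros assms)

lemma cont_transpose[continuous_intros]:
  fixes f :: "'a::topological_space \<Rightarrow> real^'m^'n"
  assumes "continuous_on S f"
  shows "continuous_on S (\<lambda>x. transpose (f x))"
  unfolding transpose_def
  by (intro continuous_intros assms)

lemma closed_stiefel: "closed (stiefel :: (real^'p^'n) set)"
  unfolding stiefel_def
  by (intro closed_Collect_eq continuous_intros)

lemma stiefel_norm: "U \<in> stiefel \<Longrightarrow> (norm (U::real^'p^'n))^2 = real CARD('p)"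
proof -
  assume "U \<in> stiefel"
  then have "transpose U ** U = mat 1" by (simp add: stiefel_def)
  have "(norm (U::real^'p^'n))^2 = trace (U ** transpose U)" by (rule norm_sq_trace)
  also have "\<dots> = trace (transpose U ** U)" by (rule trace_mul_sym)
  also have "\<dots> = real CARD('p)" using \<open>transpose U ** U = mat 1\<close> by (simp add: trace_I)
  finally show ?thesis .
qed

lemma compact_stiefel: "compact (stiefel :: (real^'p^'n) set)"
proof -
  have "bounded (stiefel :: (real^'p^'n) set)"
    unfolding bounded_iff
  proof (intro exI ballI)
    fix U :: "real^'p^'n" assume "U \<in> stiefel"
    then have "(norm U)^2 = real CARD('p)" by (rule stiefel_norm)
    then show "norm U \<le> sqrt (real CARD('p))"
      by (metis norm_ge_zero real_sqrt_abs real_sqrt_le_iff abs_of_nonneg order_refl)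
  qed
  then show ?thesis using closed_stiefel by (simp add: compact_eq_bounded_closed)
qed

lemma bounded_on_stiefel:
  fixes f :: "real^'p^'n \<Rightarrow> 'b::real_normed_vector"
  assumes "continuous_on UNIV f"
  shows "\<exists>B. \<forall>U\<in>stiefel. norm (f U) \<le> B"
proof -
  have "compact (f ` stiefel)"
    by (rule compact_continuous_image[OF continuous_on_subset[OF assms] compact_stiefel]) simp
  then have "bounded (f ` stiefel)" by (rule compact_imp_bounded)
  then show ?thesis unfolding bounded_iff by auto
qed

context
  fixes \<mu> :: "(real^'p^'n) measure"
  assumes su: "stiefel_uniform \<mu>"
begin

lemma su_prob: "prob_space \<mu>" using su by (simp add: stiefel_uniform_def)
lemma su_sets: "sets \<mu> = sets borel" using su by (simp add: stiefel_uniform_def)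
lemma su_space: "space \<mu> = UNIV" using sets_eq_imp_space_eq[OF su_sets] by simp

lemma su_AE: "AE U in \<mu>. U \<in> stiefel"
proof -
  interpret prob_space \<mu> by (rule su_prob)
  have "emeasure \<mu> stiefel = 1" using su by (simp add: stiefel_uniform_def)
  then have "prob stiefel = 1" by (simp add: measure_def)
  then show ?thesis by (rule AE_prob_1)
qed

lemma su_meas:
  fixes f :: "real^'p^'n \<Rightarrow> 'b::{second_countable_topology, real_normed_vector}"
  assumes "continuous_on UNIV f"
  shows "f \<in> borel_measurable \<mu>"
proof -
  have "f \<in> borel_measurable borel" by (rule borel_measurable_continuous_onI[OF assms])
  then show ?thesis by (simp only: measurable_cong_sets[OF su_sets refl])
qed

lemma su_integrable:
  fixes f :: "real^'p^'n \<Rightarrow> 'b::{banach, second_countable_topology}"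
  assumes "continuous_on UNIV f"
  shows "integrable \<mu> f"
proof -
  interpret prob_space \<mu> by (rule su_prob)
  obtain B where B: "\<forall>U\<in>stiefel. norm (f U) \<le> B" using bounded_on_stiefel[OF assms] by blast
  have "AE U in \<mu>. norm (f U) \<le> B" using su_AE by eventually_elim (use B in auto)
  then show ?thesis by (rule integrable_const_bound) (rule su_meas[OF assms])
qed

lemma su_AE_False: "\<not> (AE U in \<mu>. False)"
proof -
  interpret prob_space \<mu> by (rule su_prob)
  show ?thesis by (simp add: AE_False_iff emeasure_space_1)
qed

end


lemma cont_etr[continuous_intros]:
  fixes f :: "'a::topological_space \<Rightarrow> real^'n^'n"
  assumes "continuous_on S f"
  shows "continuous_on S (\<lambda>x. etr (f x))"
  unfolding etr_def trace_def
  by (intro continuous_intros assms)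

lemma etr_pos: "etr X > 0" by (simp add: etr_def)

lemma likelihood_eq:
  fixes U :: "real^'p^'n" and Y :: "real^'k^'n" and S :: "real^'k^'p"
  assumes U: "transpose U ** U = mat 1"
  shows "likelihood \<sigma> Y U S =
     ((2 * pi * \<sigma>\<^sup>2) powr (- real (CARD('n) * CARD('k)) / 2) *
      exp (- ((norm Y)^2 - (norm (transpose U ** Y))^2) / (2 * \<sigma>\<^sup>2))) *
      exp (- (norm (S - transpose U ** Y))\<^sup>2 / (2 * \<sigma>\<^sup>2))"
proof -
  have eq: "- (norm (Y - U ** S))\<^sup>2 / (2 * \<sigma>\<^sup>2) =
        - ((norm Y)^2 - (norm (transpose U ** Y))^2) / (2 * \<sigma>\<^sup>2) + - (norm (S - transpose U ** Y))\<^sup>2 / (2 * \<sigma>\<^sup>2)"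
    unfolding decomp[OF U] by (simp add: add_divide_distrib diff_divide_distrib)
  show ?thesis unfolding likelihood_def by (simp only: eq exp_add mult.assoc)
qed

lemma marg_closed:
  fixes U :: "real^'p^'n" and Y :: "real^'k^'n"
  assumes U: "transpose U ** U = mat 1"
  shows "marginal_likelihood \<sigma> Y U =
     ((2 * pi * \<sigma>\<^sup>2) powr (- real (CARD('n) * CARD('k)) / 2) *
      exp (- ((norm Y)^2 - (norm (transpose U ** Y))^2) / (2 * \<sigma>\<^sup>2))) *
     (\<integral>S. exp (- (norm S)\<^sup>2 / (2 * \<sigma>\<^sup>2)) \<partial>(lborel :: (real^'k^'p) measure))"
proof -
  have "marginal_likelihood \<sigma> Y U =
     ((2 * pi * \<sigma>\<^sup>2) powr (- real (CARD('n) * CARD('k)) / 2) *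
      exp (- ((norm Y)^2 - (norm (transpose U ** Y))^2) / (2 * \<sigma>\<^sup>2))) *
     (\<integral>S. exp (- (norm (S - transpose U ** Y))\<^sup>2 / (2 * \<sigma>\<^sup>2)) \<partial>(lborel :: (real^'k^'p) measure))"
    unfolding marginal_likelihood_def likelihood_eq[OF U] by (rule integral_mult_right_zero)
  also have "(\<integral>S. exp (- (norm (S - transpose U ** Y))\<^sup>2 / (2 * \<sigma>\<^sup>2)) \<partial>(lborel :: (real^'k^'p) measure))
      = (\<integral>S. exp (- (norm S)\<^sup>2 / (2 * \<sigma>\<^sup>2)) \<partial>(lborel :: (real^'k^'p) measure))"
    by (rule gauss_shift[where f="\<lambda>S. exp (- (norm S)\<^sup>2 / (2 * \<sigma>\<^sup>2))"]) measurable
  finally show ?thesis .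
qed

lemma marg_meas:
  assumes "\<sigma> \<noteq> 0"
  shows "(\<lambda>U::real^'p^'n. marginal_likelihood \<sigma> (Y::real^'k^'n) U) \<in> borel_measurable borel"
proof -
  have c: "continuous_on UNIV (case_prod (likelihood \<sigma> Y) :: (real^'p^'n) \<times> (real^'k^'p) \<Rightarrow> real)"
    unfolding case_prod_beta' likelihood_def using assms by (intro continuous_intros) auto
  have "(case_prod (likelihood \<sigma> Y) :: (real^'p^'n) \<times> (real^'k^'p) \<Rightarrow> real) \<in> borel_measurable borel"
    by (rule borel_measurable_continuous_onI[OF c])
  then have "(case_prod (likelihood \<sigma> Y) :: (real^'p^'n) \<times> (real^'k^'p) \<Rightarrow> real) \<in> borel_measurable (borel \<Otimes>\<^sub>M lborel)"
    by (simp add: borel_prod measurable_cong_sets[OF sets_pair_measure_cong[OF refl sets_lborel] refl])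
  then show ?thesis unfolding marginal_likelihood_def
    by (rule lborel.borel_measurable_lebesgue_integral)
qed


lemma su_pos:
  fixes \<mu> :: "(real^'p^'n) measure"
  assumes su: "stiefel_uniform \<mu>" and c: "continuous_on UNIV f" and p: "\<And>x. f x > (0::real)"
  shows "(\<integral>x. f x \<partial>\<mu>) > 0"
proof -
  have i: "integrable \<mu> f" by (rule su_integrable[OF su c])
  have "(\<integral>x. f x \<partial>\<mu>) \<ge> 0" using p by (simp add: less_imp_le)
  moreover have "(\<integral>x. f x \<partial>\<mu>) \<noteq> 0"
  proof
    assume "(\<integral>x. f x \<partial>\<mu>) = 0"
    then have "AE x in \<mu>. f x = 0" using integral_nonneg_eq_0_iff_AE[OF i] p by (simp add: less_imp_le)
    then have "AE x in \<mu>. False" using p by (metis (mono_tags, lifting) eventually_mono less_irrefl)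
    then show False using su_AE_False[OF su] by simp
  qed
  ultimately show ?thesis by linarith
qed

lemma etr_split:
  fixes U :: "real^'p^'n" and M :: "real^'n^'n" and Y :: "real^'k^'n"
  shows "etr (transpose U ** (M + c *\<^sub>R (Y ** transpose Y)) ** U) =
         etr (transpose U ** M ** U) * exp (c * (norm (transpose U ** Y))^2)"
proof -
  have "transpose U ** (M + c *\<^sub>R (Y ** transpose Y)) ** U =
        transpose U ** M ** U + c *\<^sub>R (transpose U ** (Y ** transpose Y) ** U)"
    by (simp add: matrix_add_ldistrib mm_add_r mm_scale_l mm_scale_r)
  then show ?thesis
    by (simp add: etr_def trace_add trace_scale trace_quad exp_add)
qed

lemma part1:
  fixes \<mu> :: "(real^'p^'n) measure" and M :: "real^'n^'n" and Y :: "real^'k^'n" and \<sigma> :: real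
  assumes su: "stiefel_uniform \<mu>" and sig: "\<sigma> > 0"
  defines "prior \<equiv> bingham_density \<mu> M"
    and "A \<equiv> M + (1 / (2 * \<sigma>\<^sup>2)) *\<^sub>R (Y ** transpose Y)"
  shows "\<forall>U \<in> stiefel. posterior_density \<mu> prior \<sigma> Y U = bingham_density \<mu> A U"
proof
  define Z1 where "Z1 = (\<integral>V. etr (transpose V ** M ** V) \<partial>\<mu>)"
  define ZA where "ZA = (\<integral>V. etr (transpose V ** A ** V) \<partial>\<mu>)"
  define C0 where "C0 = (2 * pi * \<sigma>\<^sup>2) powr (- real (CARD('n) * CARD('k)) / 2)"
  define G where "G = (\<integral>S. exp (- (norm S)\<^sup>2 / (2 * \<sigma>\<^sup>2)) \<partial>(lborel :: (real^'k^'p) measure))"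
  define D where "D = C0 * exp (- (norm Y)\<^sup>2 / (2 * \<sigma>\<^sup>2)) * G / Z1"
  have Z1p: "Z1 > 0" unfolding Z1_def by (rule su_pos[OF su]) (intro continuous_intros, rule etr_pos)
  have ZAp: "ZA > 0" unfolding ZA_def by (rule su_pos[OF su]) (intro continuous_intros, rule etr_pos)
  have Gp: "G > 0" unfolding G_def using sig by (intro gauss_pos) simp
  have C0p: "C0 > 0" unfolding C0_def using sig by simp
  have Dp: "D > 0" unfolding D_def using Z1p Gp C0p by simp
  have key: "prior U * marginal_likelihood \<sigma> Y U = D * etr (transpose U ** A ** U)" if "U \<in> stiefel" for U
  proof -
    have U: "transpose U ** U = mat 1" using that by (simp add: stiefel_def)
    have "prior U * marginal_likelihood \<sigma> Y U =
      etr (transpose U ** M ** U) / Z1 *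
      (C0 * exp (- ((norm Y)^2 - (norm (transpose U ** Y))^2) / (2 * \<sigma>\<^sup>2)) * G)"
      unfolding prior_def bingham_density_def marg_closed[OF U] Z1_def C0_def G_def ..
    also have "exp (- ((norm Y)^2 - (norm (transpose U ** Y))^2) / (2 * \<sigma>\<^sup>2)) =
        exp (- (norm Y)\<^sup>2 / (2 * \<sigma>\<^sup>2)) * exp ((1 / (2 * \<sigma>\<^sup>2)) * (norm (transpose U ** Y))^2)"
      by (simp add: exp_add[symmetric] diff_divide_distrib)
    also have "etr (transpose U ** A ** U) = etr (transpose U ** M ** U) * exp ((1 / (2 * \<sigma>\<^sup>2)) * (norm (transpose U ** Y))^2)"
      unfolding A_def by (rule etr_split)
    ultimately show ?thesis unfolding D_def by simp
  qed
  have "(\<integral>V. prior V * marginal_likelihood \<sigma> Y V \<partial>\<mu>) = (\<integral>V. D * etr (transpose V ** A ** V) \<partial>\<mu>)"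
  proof (rule integral_cong_AE)
    show "(\<lambda>V. prior V * marginal_likelihood \<sigma> Y V) \<in> borel_measurable \<mu>"
    proof -
      have "prior \<in> borel_measurable \<mu>" unfolding prior_def bingham_density_def
        by (rule su_meas[OF su]) (use Z1p in \<open>auto simp: Z1_def intro!: continuous_intros\<close>)
      moreover have "marginal_likelihood \<sigma> Y \<in> borel_measurable \<mu>"
        using marg_meas[of \<sigma> Y] sig by (simp only: measurable_cong_sets[OF su_sets[OF su] refl]) simp
      ultimately show ?thesis by measurable
    qed
    show "(\<lambda>V. D * etr (transpose V ** A ** V)) \<in> borel_measurable \<mu>"
      by (rule su_meas[OF su]) (intro continuous_intros)
    show "AE V in \<mu>. prior V * marginal_likelihood \<sigma> Y V = D * etr (transpose V ** A ** V)"
      using su_AE[OF su] by eventually_elim (rule key)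
  qed
  also have "\<dots> = D * ZA" unfolding ZA_def by simp
  finally have den: "(\<integral>V. prior V * marginal_likelihood \<sigma> Y V \<partial>\<mu>) = D * ZA" .
  fix U :: "real^'p^'n" assume "U \<in> stiefel"
  then show "posterior_density \<mu> prior \<sigma> Y U = bingham_density \<mu> A U"
    unfolding posterior_density_def den key[OF \<open>U \<in> stiefel\<close>] bingham_density_def ZA_def[symmetric]
    using Dp by simp
qed


lemma sym_inner:
  fixes A :: "real^'n^'n"
  assumes "transpose A = A"
  shows "inner (A *v x) y = inner x (A *v y)"
  using dot_lmul_matrix[of x A y] assms by (metis transpose_matrix_vector)

lemma quad_zero:
  fixes c d :: real
  assumes "\<And>t. 2 * t * c + t\<^sup>2 * d \<le> 0"
  shows "c = 0"
proof (rule ccontr)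
  assume c: "c \<noteq> 0"
  define e where "e = \<bar>d\<bar> + 1"
  have e: "e > 0" "\<bar>d\<bar> < e" unfolding e_def by auto
  define t where "t = c / e"
  have "2 * t * c + t\<^sup>2 * d \<le> 0" by (rule assms)
  then have "2 * c * c * e + c * c * d \<le> 0"
    using e unfolding t_def by (simp add: power2_eq_square field_simps)
  moreover have cc: "c * c > 0" using c not_real_square_gt_zero by blast
  moreover have ed: "2 * e + d > 0" using e by linarith
  have "c * c * (2 * e + d) > 0" by (metis cc ed mult_pos_pos)
  moreover have "c * c * (2 * e + d) = 2 * c * c * e + c * c * d" by (simp add: algebra_simps)
  ultimately show False using \<open>2 * c * c * e + c * c * d \<le> 0\<close> by linarith
qed

lemma exists_eig_perp:
  fixes A :: "real^'n^'n" and B :: "(real^'n) set"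
  assumes sym: "transpose A = A" and eig: "\<forall>b\<in>B. \<exists>l. A *v b = l *\<^sub>R b"
    and x0: "x0 \<noteq> 0" "\<forall>b\<in>B. inner b x0 = 0"
  shows "\<exists>v. norm v = 1 \<and> (\<forall>b\<in>B. inner b v = 0) \<and> (\<exists>l. A *v v = l *\<^sub>R v)"
proof -
  define S where "S = {x::real^'n. \<forall>b\<in>B. inner b x = 0}"
  define K where "K = S \<inter> {x. norm x = 1}"
  have inv: "A *v x \<in> S" if "x \<in> S" for x
  proof -
    have "inner b (A *v x) = 0" if "b \<in> B" for b
    proof -
      obtain l where "A *v b = l *\<^sub>R b" using eig \<open>b \<in> B\<close> by blast
      then have "inner b (A *v x) = l * inner b x" using sym_inner[OF sym, of b x] by simp
      then show ?thesis using \<open>x \<in> S\<close> \<open>b \<in> B\<close> by (simp add: S_def)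
    qed
    then show ?thesis by (simp add: S_def)
  qed
  have Sadd: "x + y \<in> S" "t *\<^sub>R x \<in> S" "x - y \<in> S" if "x \<in> S" "y \<in> S" for x y t
    using that by (auto simp: S_def inner_add_right inner_diff_right)
  have closedS: "closed S"
  proof -
    have "S = (\<Inter>b\<in>B. {x. inner b x = 0})" by (auto simp: S_def)
    then show ?thesis by (simp add: closed_INT closed_hyperplane)
  qed
  have "compact K"
  proof -
    have "closed K" unfolding K_def
      by (intro closed_Int closedS closed_Collect_eq continuous_intros)
    moreover have "bounded K" unfolding K_def bounded_iff by auto
    ultimately show ?thesis by (simp add: compact_eq_bounded_closed)
  qed
  have "(1 / norm x0) *\<^sub>R x0 \<in> K" using x0 by (auto simp: K_def S_def)
  then have "K \<noteq> {}" by auto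
  have "continuous_on K (\<lambda>x. inner x (A *v x))"
    by (intro continuous_intros)
  then obtain v where vK: "v \<in> K" and vmax: "\<And>y. y \<in> K \<Longrightarrow> inner y (A *v y) \<le> inner v (A *v v)"
    using continuous_attains_sup[OF \<open>compact K\<close> \<open>K \<noteq> {}\<close>] by blast
  define l where "l = inner v (A *v v)"
  have vS: "v \<in> S" and vn: "norm v = 1" using vK by (auto simp: K_def)
  have vv: "inner v v = 1" using vn by (simp add: norm_eq_1)
  have perp: "inner w (A *v v) = 0" if wS: "w \<in> S" and wv: "inner w v = 0" for w
  proof -
    have "2 * t * inner w (A *v v) + t\<^sup>2 * (inner w (A *v w) - l * inner w w) \<le> 0" for t
    proof -
      define y where "y = v + t *\<^sub>R w"
      have yy: "inner y y = 1 + t\<^sup>2 * inner w w"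
        unfolding y_def using vv wv by (simp add: inner_add_left inner_add_right inner_commute power2_eq_square)
      have yS: "y \<in> S" unfolding y_def using vS wS Sadd by blast
      have ypos: "inner y y > 0" using yy by (simp add: add_pos_nonneg)
      then have yn: "norm y > 0" by (simp add: norm_eq_sqrt_inner)
      have "(1 / norm y) *\<^sub>R y \<in> K" using yS yn Sadd(2)[OF yS yS] by (auto simp: K_def)
      then have "inner ((1 / norm y) *\<^sub>R y) (A *v ((1 / norm y) *\<^sub>R y)) \<le> l"
        unfolding l_def by (rule vmax)
      then have "inner y (A *v y) / (norm y)\<^sup>2 \<le> l"
        by (simp add: matrix_vector_mult_scaleR power2_eq_square)
      then have "inner y (A *v y) \<le> l * inner y y"
        using yn by (simp add: divide_le_eq power2_norm_eq_inner[symmetric] mult.commute)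
      moreover have "inner y (A *v y) = l + 2 * t * inner w (A *v v) + t\<^sup>2 * inner w (A *v w)"
      proof -
        have "inner v (A *v w) = inner w (A *v v)"
          using sym_inner[OF sym, of v w] by (simp add: inner_commute)
        moreover have "A *v y = A *v v + t *\<^sub>R (A *v w)"
          unfolding y_def by (simp add: matrix_vector_right_distrib matrix_vector_mult_scaleR)
        ultimately show ?thesis unfolding l_def
          by (simp add: y_def inner_add_left inner_add_right power2_eq_square distrib_left)
      qed
      moreover have "l * inner y y = l + t\<^sup>2 * (l * inner w w)" using yy by (simp add: algebra_simps)
      moreover have "t\<^sup>2 * (inner w (A *v w) - l * inner w w) = t\<^sup>2 * inner w (A *v w) - t\<^sup>2 * (l * inner w w)"
        by (simp add: right_diff_distrib)
      ultimately show ?thesis by linarith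
    qed
    then show ?thesis by (rule quad_zero)
  qed
  define z where "z = A *v v - l *\<^sub>R v"
  have zS: "z \<in> S" unfolding z_def using inv[OF vS] vS Sadd by blast
  have zv: "inner z v = 0"
  proof -
    have "inner z v = inner (A *v v) v - l * inner v v" unfolding z_def by (simp add: inner_diff_left)
    then show ?thesis using vv by (simp add: l_def inner_commute[of "A *v v" v])
  qed
  have "inner z z = inner z (A *v v) - l * inner z v" unfolding z_def by (simp add: inner_diff_right)
  also have "\<dots> = 0" using perp[OF zS zv] zv by simp
  finally have "z = 0" by simp
  then have "A *v v = l *\<^sub>R v" unfolding z_def by simp
  then show ?thesis using vn vS by (auto simp: S_def)
qed


definition ONE :: "real^'n^'n \<Rightarrow> (real^'n) set \<Rightarrow> bool" where
  "ONE A B \<longleftrightarrow> finite B \<and> (\<forall>b\<in>B. norm b = 1 \<and> (\<exists>l. A *v b = l *\<^sub>R b)) \<and>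
     (\<forall>b\<in>B. \<forall>b'\<in>B. b \<noteq> b' \<longrightarrow> inner b b' = 0)"

lemma ONE_card:
  fixes B :: "(real^'n) set"
  assumes o: "ONE A B"
  shows "card B \<le> CARD('n)"
proof -
  have "pairwise orthogonal B" using o by (auto simp: ONE_def pairwise_def orthogonal_def)
  moreover have "0 \<notin> B" using o by (auto simp: ONE_def)
  ultimately have "independent B" by (rule pairwise_orthogonal_independent)
  then have "card B \<le> DIM(real^'n)" using independent_bound by blast
  then show ?thesis by simp
qed

lemma ONE_coeff:
  assumes o: "ONE A B" and b: "b \<in> B"
  shows "inner b (\<Sum>c\<in>B. f c *\<^sub>R c) = f b"
proof -
  have fin: "finite B" using o by (simp add: ONE_def)
  have "inner b (\<Sum>c\<in>B. f c *\<^sub>R c) = (\<Sum>c\<in>B. f c * inner b c)"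
    by (simp add: inner_sum_right)
  also have "\<dots> = f b * inner b b + (\<Sum>c\<in>B - {b}. f c * inner b c)"
    using fin b by (simp add: sum.remove)
  also have "(\<Sum>c\<in>B - {b}. f c * inner b c) = 0"
    using o b by (intro sum.neutral) (auto simp: ONE_def)
  also have "inner b b = 1" using o b by (simp add: ONE_def norm_eq_1)
  finally show ?thesis by simp
qed

lemma spectral:
  fixes A :: "real^'n^'n"
  assumes sym: "transpose A = A"
  shows "\<exists>B. ONE A B \<and> (\<forall>x. x = (\<Sum>b\<in>B. inner b x *\<^sub>R b))"
proof -
  define P where "P k \<longleftrightarrow> (\<exists>B. ONE A B \<and> card B = k)" for k
  have P0: "P 0" unfolding P_def by (rule exI[of _ "{}"]) (simp add: ONE_def)
  have bnd: "\<forall>y. P y \<longrightarrow> y \<le> CARD('n)" unfolding P_def using ONE_card by blast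
  obtain k where Pk: "P k" and kmax: "\<forall>y. P y \<longrightarrow> y \<le> k"
    using Nat.ex_has_greatest_nat[OF P0 bnd] by blast
  obtain B where o: "ONE A B" and cB: "card B = k" using Pk unfolding P_def by blast
  have fin: "finite B" using o by (simp add: ONE_def)
  show ?thesis
  proof (intro exI conjI allI)
    show "ONE A B" by (rule o)
    fix x :: "real^'n"
    define z where "z = x - (\<Sum>b\<in>B. inner b x *\<^sub>R b)"
    have zperp: "\<forall>b\<in>B. inner b z = 0"
      using ONE_coeff[OF o] by (simp add: z_def inner_diff_right)
    have "z = 0"
    proof (rule ccontr)
      assume "z \<noteq> 0"
      moreover have "\<forall>b\<in>B. \<exists>l. A *v b = l *\<^sub>R b" using o by (simp add: ONE_def)
      ultimately obtain v where v: "norm v = 1" "\<forall>b\<in>B. inner b v = 0" "\<exists>l. A *v v = l *\<^sub>R v"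
        using exists_eig_perp[OF sym] zperp by blast
      have vB: "v \<notin> B"
      proof
        assume "v \<in> B"
        then have "inner v v = 0" using v(2) by blast
        then show False using v(1) by simp
      qed
      have "ONE A (insert v B)"
        using o v vB by (auto simp: ONE_def inner_commute)
      moreover have "card (insert v B) = k + 1" using fin vB cB by simp
      ultimately have "P (k + 1)" unfolding P_def by blast
      then show False using kmax by fastforce
    qed
    then show "x = (\<Sum>b\<in>B. inner b x *\<^sub>R b)" by (simp add: z_def)
  qed
qed


lemma mv_sum: "finite S \<Longrightarrow> (M::real^'n^'m) *v sum f S = (\<Sum>x\<in>S. M *v f x)"
  by (induction rule: finite_induct) (simp_all add: matrix_vector_right_distrib)

lemma column_norm:
  fixes V :: "real^'p^'n"
  assumes "transpose V ** V = mat 1"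
  shows "inner (column i V) (column i V) = 1"
proof -
  have "(transpose V ** V) $ i $ i = inner (column i V) (column i V)"
    by (simp add: matrix_mult_transpose_dot_column)
  then show ?thesis using assms by (simp add: mat_def)
qed

lemma column_nz:
  fixes V :: "real^'p^'n"
  assumes "transpose V ** V = mat 1"
  shows "column i V \<noteq> 0"
  using column_norm[OF assms, of i] by auto

lemma fin:
  fixes A E :: "real^'n^'n" and V :: "real^'p^'n"
  assumes sym: "transpose A = A"
    and H1: "\<And>x l. x \<noteq> 0 \<Longrightarrow> A *v x = l *\<^sub>R x \<Longrightarrow> \<exists>c. E *v x = c *\<^sub>R x"
    and H2: "\<And>q q' l l'. norm q = 1 \<Longrightarrow> norm q' = 1 \<Longrightarrow> inner q q' = 0 \<Longrightarrow>
        A *v q = l *\<^sub>R q \<Longrightarrow> A *v q' = l' *\<^sub>R q' \<Longrightarrow> l \<ge> l' \<Longrightarrow> inner q (E *v q) \<ge> inner q' (E *v q')"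
    and H3: "\<And>q q' l l'. norm q = 1 \<Longrightarrow> norm q' = 1 \<Longrightarrow> inner q q' = 0 \<Longrightarrow>
        A *v q = l *\<^sub>R q \<Longrightarrow> A *v q' = l' *\<^sub>R q' \<Longrightarrow> l > l' \<Longrightarrow> inner q (E *v q) > inner q' (E *v q')"
  shows "top_eigvecs E V \<longleftrightarrow> top_eigvecs A V"
proof -
  obtain B where o: "ONE A B" and exp: "\<And>x. x = (\<Sum>b\<in>B. inner b x *\<^sub>R b)"
    using spectral[OF sym] by blast
  have fin: "finite B" using o by (simp add: ONE_def)
  have Bn: "norm b = 1" if "b \<in> B" for b using o that by (simp add: ONE_def)
  have Bo: "inner b b' = 0" if "b \<in> B" "b' \<in> B" "b \<noteq> b'" for b b' using o that by (simp add: ONE_def)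
  define la where "la b = (SOME l. A *v b = l *\<^sub>R b)" for b
  have la: "A *v b = la b *\<^sub>R b" if "b \<in> B" for b
  proof -
    have "\<exists>l. A *v b = l *\<^sub>R b" using o that unfolding ONE_def by blast
    then show ?thesis unfolding la_def by (rule someI_ex)
  qed
  have Bnz: "b \<noteq> 0" if "b \<in> B" for b using Bn[OF that] by auto
  define d where "d b = (SOME c. E *v b = c *\<^sub>R b)" for b
  have d: "E *v b = d b *\<^sub>R b" if "b \<in> B" for b
    unfolding d_def using H1[OF Bnz[OF that] la[OF that]] by (rule someI_ex)
  have dq: "inner b (E *v b) = d b" if "b \<in> B" for b
    using d[OF that] Bn[OF that] by (simp add: norm_eq_1)
  have strict: "d b > d b'" if "b \<in> B" "b' \<in> B" "la b > la b'" for b b'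
  proof -
    have "b \<noteq> b'" using that by auto
    then show ?thesis using H3[OF Bn[OF that(1)] Bn[OF that(2)] Bo[OF that(1,2)] la[OF that(1)] la[OF that(2)] that(3)]
      dq that by simp
  qed
  have eqd: "d b = d b'" if "b \<in> B" "b' \<in> B" "la b = la b'" for b b'
  proof (cases "b = b'")
    case False
    then show ?thesis
      using H2[OF Bn[OF that(1)] Bn[OF that(2)] Bo[OF that(1,2)] la[OF that(1)] la[OF that(2)]]
        H2[OF Bn[OF that(2)] Bn[OF that(1)] Bo[OF that(2,1)] la[OF that(2)] la[OF that(1)]]
        Bo[OF that(1,2)] dq that by (simp add: inner_commute)
  qed simp
  have mono: "la b \<le> la b' \<longleftrightarrow> d b \<le> d b'" if "b \<in> B" "b' \<in> B" for b b'
    using strict[OF that] strict[OF that(2,1)] eqd[OF that] by (metis linorder_not_le order_le_less)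
  have Aexp: "A *v x = (\<Sum>b\<in>B. (inner b x * la b) *\<^sub>R b)" for x
  proof -
    have "A *v x = A *v (\<Sum>b\<in>B. inner b x *\<^sub>R b)" by (rule arg_cong[OF exp])
    also have "\<dots> = (\<Sum>b\<in>B. (inner b x * la b) *\<^sub>R b)"
      by (simp add: mv_sum[OF fin] matrix_vector_mult_scaleR la cong: sum.cong)
    finally show ?thesis .
  qed
  have Eexp: "E *v x = (\<Sum>b\<in>B. (inner b x * d b) *\<^sub>R b)" for x
  proof -
    have "E *v x = E *v (\<Sum>b\<in>B. inner b x *\<^sub>R b)" by (rule arg_cong[OF exp])
    also have "\<dots> = (\<Sum>b\<in>B. (inner b x * d b) *\<^sub>R b)"
      by (simp add: mv_sum[OF fin] matrix_vector_mult_scaleR d cong: sum.cong)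
    finally show ?thesis .
  qed
  have nzc: "\<exists>b\<in>B. inner b x \<noteq> 0" if "x \<noteq> 0" for x
  proof (rule ccontr)
    assume "\<not> (\<exists>b\<in>B. inner b x \<noteq> 0)"
    then have "(\<Sum>b\<in>B. inner b x *\<^sub>R b) = 0" by simp
    then have "x = 0" using exp[of x] by metis
    then show False using that by simp
  qed
  have key1: "\<exists>b\<in>B. la b = l \<and> E *v x = d b *\<^sub>R x" if xnz: "x \<noteq> 0" "A *v x = l *\<^sub>R x" for x l
  proof -
    have c: "la b = l" if "b \<in> B" "inner b x \<noteq> 0" for b
    proof -
      have "inner b x * la b = inner b (A *v x)" using ONE_coeff[OF o that(1), of "\<lambda>b. inner b x * la b"] Aexp[of x] by simp
      also have "\<dots> = l * inner b x" using \<open>A *v x = l *\<^sub>R x\<close> by simp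
      finally show ?thesis using that(2) by simp
    qed
    obtain b0 where b0: "b0 \<in> B" "inner b0 x \<noteq> 0" using nzc[OF xnz(1)] by blast
    have "E *v x = (\<Sum>b\<in>B. (inner b x * d b0) *\<^sub>R b)"
      unfolding Eexp
    proof (rule sum.cong[OF refl])
      fix b assume "b \<in> B"
      show "(inner b x * d b) *\<^sub>R b = (inner b x * d b0) *\<^sub>R b"
      proof (cases "inner b x = 0")
        case False
        then show ?thesis using eqd[OF \<open>b \<in> B\<close> b0(1)] c[OF \<open>b \<in> B\<close> False] c[OF b0] by simp
      qed simp
    qed
    also have "\<dots> = d b0 *\<^sub>R x"
      by (subst (2) exp[of x]) (simp add: scaleR_sum_right mult.commute)
    finally show ?thesis using b0 c[OF b0] by blast
  qed
  have key2: "\<exists>b\<in>B. d b = c \<and> A *v x = la b *\<^sub>R x" if xnz: "x \<noteq> 0" "E *v x = c *\<^sub>R x" for x c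
  proof -
    have cc: "d b = c" if "b \<in> B" "inner b x \<noteq> 0" for b
    proof -
      have "inner b x * d b = inner b (E *v x)" using ONE_coeff[OF o that(1), of "\<lambda>b. inner b x * d b"] Eexp[of x] by simp
      also have "\<dots> = c * inner b x" using \<open>E *v x = c *\<^sub>R x\<close> by simp
      finally show ?thesis using that(2) by simp
    qed
    obtain b0 where b0: "b0 \<in> B" "inner b0 x \<noteq> 0" using nzc[OF xnz(1)] by blast
    have "A *v x = (\<Sum>b\<in>B. (inner b x * la b0) *\<^sub>R b)"
      unfolding Aexp
    proof (rule sum.cong[OF refl])
      fix b assume "b \<in> B"
      show "(inner b x * la b) *\<^sub>R b = (inner b x * la b0) *\<^sub>R b"
      proof (cases "inner b x = 0")
        case False
        then have "d b = d b0" using cc[OF \<open>b \<in> B\<close> False] cc[OF b0] by simp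
        then have "la b = la b0" using mono[OF \<open>b \<in> B\<close> b0(1)] mono[OF b0(1) \<open>b \<in> B\<close>] by linarith
        then show ?thesis by simp
      qed simp
    qed
    also have "\<dots> = la b0 *\<^sub>R x"
      by (subst (2) exp[of x]) (simp add: scaleR_sum_right mult.commute)
    finally show ?thesis using b0 cc[OF b0] by blast
  qed
  show ?thesis
  proof
    assume "top_eigvecs E V"
    then obtain lam where VV: "transpose V ** V = mat 1"
      and ev: "\<forall>i. E *v column i V = lam $ i *\<^sub>R column i V"
      and top: "\<forall>x c. x \<noteq> 0 \<longrightarrow> E *v x = c *\<^sub>R x \<longrightarrow> transpose V *v x = 0 \<longrightarrow> (\<forall>i. c \<le> lam $ i)"
      unfolding top_eigvecs_def by blast
    have "\<forall>i. \<exists>b. b \<in> B \<and> d b = lam $ i \<and> A *v column i V = la b *\<^sub>R column i V"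
      using key2[OF column_nz[OF VV]] ev by blast
    then obtain bs where bs: "\<And>i. bs i \<in> B" "\<And>i. d (bs i) = lam $ i"
      "\<And>i. A *v column i V = la (bs i) *\<^sub>R column i V" by metis
    show "top_eigvecs A V" unfolding top_eigvecs_def
    proof (intro conjI exI[of _ "\<chi> i. la (bs i)"] allI impI)
      show "transpose V ** V = mat 1" by (rule VV)
      fix i show "A *v column i V = (\<chi> i. la (bs i)) $ i *\<^sub>R column i V" using bs by simp
    next
      fix x c i assume x: "x \<noteq> 0" "A *v x = c *\<^sub>R x" "transpose V *v x = 0"
      obtain b where b: "b \<in> B" "la b = c" "E *v x = d b *\<^sub>R x" using key1[OF x(1,2)] by blast
      have "d b \<le> lam $ i" using top x b by blast
      then have "d b \<le> d (bs i)" using bs by simp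
      then show "c \<le> (\<chi> i. la (bs i)) $ i" using mono[OF b(1) bs(1)] b by simp
    qed
  next
    assume "top_eigvecs A V"
    then obtain lam where VV: "transpose V ** V = mat 1"
      and ev: "\<forall>i. A *v column i V = lam $ i *\<^sub>R column i V"
      and top: "\<forall>x c. x \<noteq> 0 \<longrightarrow> A *v x = c *\<^sub>R x \<longrightarrow> transpose V *v x = 0 \<longrightarrow> (\<forall>i. c \<le> lam $ i)"
      unfolding top_eigvecs_def by blast
    have "\<forall>i. \<exists>b. b \<in> B \<and> la b = lam $ i \<and> E *v column i V = d b *\<^sub>R column i V"
      using key1[OF column_nz[OF VV]] ev by blast
    then obtain bs where bs: "\<And>i. bs i \<in> B" "\<And>i. la (bs i) = lam $ i"
      "\<And>i. E *v column i V = d (bs i) *\<^sub>R column i V" by metis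
    show "top_eigvecs E V" unfolding top_eigvecs_def
    proof (intro conjI exI[of _ "\<chi> i. d (bs i)"] allI impI)
      show "transpose V ** V = mat 1" by (rule VV)
      fix i show "E *v column i V = (\<chi> i. d (bs i)) $ i *\<^sub>R column i V" using bs by simp
    next
      fix x c i assume x: "x \<noteq> 0" "E *v x = c *\<^sub>R x" "transpose V *v x = 0"
      obtain b where b: "b \<in> B" "d b = c" "A *v x = la b *\<^sub>R x" using key2[OF x(1,2)] by blast
      have "la b \<le> lam $ i" using top x b by blast
      then have "la b \<le> la (bs i)" using bs by simp
      then show "c \<le> (\<chi> i. d (bs i)) $ i" using mono[OF b(1) bs(1)] b by simp
    qed
  qed
qed


definition outer :: "real^'n \<Rightarrow> real^'n \<Rightarrow> real^'n^'n" where
  "outer x y = (\<chi> i j. x $ i * y $ j)"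

definition hrefl :: "real^'n \<Rightarrow> real^'n^'n" where
  "hrefl v = mat 1 - (2 / inner v v) *\<^sub>R outer v v"

lemma outer_mv: "outer x y *v z = inner y z *\<^sub>R x"
  by (simp add: outer_def matrix_vector_mult_def inner_vec_def vec_eq_iff sum_distrib_left mult_ac)

lemma refl_mv: "hrefl v *v z = z - (2 * inner v z / inner v v) *\<^sub>R v"
  by (simp add: hrefl_def matrix_vector_mult_diff_rdistrib outer_mv scaleR_matrix_vector_assoc[symmetric])

lemma transpose_outer: "transpose (outer x x) = outer x x"
  by (simp add: outer_def transpose_def vec_eq_iff mult.commute)

lemma transpose_refl: "transpose (hrefl v) = hrefl v"
proof -
  have "transpose (hrefl v) = transpose (mat 1) - transpose ((2 / inner v v) *\<^sub>R outer v v)"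
    by (simp add: hrefl_def transpose_def vec_eq_iff)
  then show ?thesis by (simp add: transpose_scalar transpose_outer hrefl_def)
qed

lemma refl_refl:
  fixes v :: "real^'n"
  assumes "v \<noteq> 0"
  shows "hrefl v ** hrefl v = mat 1"
proof (rule matrix_eq[THEN iffD2], intro allI)
  fix z :: "real^'n"
  have vv: "inner v v \<noteq> 0" using assms by simp
  define c where "c = 2 * inner v z / inner v v"
  have "inner v (hrefl v *v z) = inner v z - c * inner v v"
    by (simp add: refl_mv c_def inner_diff_right)
  also have "\<dots> = - inner v z" using vv by (simp add: c_def)
  finally have "hrefl v *v (hrefl v *v z) = (z - c *\<^sub>R v) + c *\<^sub>R v"
    by (simp add: refl_mv c_def)
  then show "(hrefl v ** hrefl v) *v z = mat 1 *v z"
    by (simp add: matrix_vector_mul_assoc[symmetric])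
qed

lemma orth_refl: "v \<noteq> 0 \<Longrightarrow> orthogonal_matrix (hrefl v)"
  by (simp add: orthogonal_matrix_def transpose_refl refl_refl)

lemma orth_inner:
  assumes "orthogonal_matrix Q"
  shows "inner (Q *v x) (Q *v y) = inner x (y :: real^'n)"
proof -
  have "inner (Q *v x) (Q *v y) = inner (transpose Q *v (Q *v x)) y"
    by (metis dot_lmul_matrix transpose_matrix_vector transpose_transpose)
  also have "\<dots> = inner x y" using assms
    by (simp add: orthogonal_matrix_def matrix_vector_mul_assoc)
  finally show ?thesis .
qed

lemma refl_swap:
  assumes "norm a = 1" "norm b = 1" "a \<noteq> b"
  shows "hrefl (a - b) *v a = b"
proof -
  have aa: "inner a a = 1" "inner b b = 1" using assms by (simp_all add: norm_eq_1)
  have "inner (a - b) a = 1 - inner a b" using aa by (simp add: inner_diff_left inner_commute[of b a])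
  moreover have "inner (a - b) (a - b) = 2 - 2 * inner a b"
    using aa by (simp add: inner_diff_left inner_diff_right inner_commute)
  moreover have "inner a b \<noteq> 1"
  proof
    assume "inner a b = 1"
    then have "inner (a - b) (a - b) = 0" using aa by (simp add: inner_diff_left inner_diff_right inner_commute)
    then show False using assms(3) by simp
  qed
  ultimately have k: "2 * inner (a - b) a / inner (a - b) (a - b) = 1" by (simp add: divide_eq_1_iff)
  show ?thesis unfolding refl_mv k by simp
qed

lemma refl_fix:
  assumes "inner v z = 0"
  shows "hrefl v *v z = z"
  using assms by (simp add: refl_mv)

lemma orth_map:
  fixes q q' x y :: "real^'n"
  assumes "norm q = 1" "norm q' = 1" "inner q q' = 0" "norm x = 1" "norm y = 1" "inner x y = 0"
  shows "\<exists>Q. orthogonal_matrix Q \<and> Q *v q = x \<and> Q *v q' = y"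
proof -
  obtain Q1 where Q1: "orthogonal_matrix Q1" "Q1 *v q = x"
  proof (cases "q = x")
    case True then show ?thesis using that[of "mat 1"] by (simp add: orthogonal_matrix_id)
  next
    case False
    have "q - x \<noteq> 0" using False by simp
    then show ?thesis using that[of "hrefl (q - x)"] orth_refl refl_swap[OF assms(1,4) False] by blast
  qed
  define q2 where "q2 = Q1 *v q'"
  have q2n: "norm q2 = 1" using orth_inner[OF Q1(1), of q' q'] assms(2) by (simp add: q2_def norm_eq_1)
  have q2x: "inner x q2 = 0" using orth_inner[OF Q1(1), of q q'] assms(3) Q1(2) by (simp add: q2_def)
  obtain Q2 where Q2: "orthogonal_matrix Q2" "Q2 *v q2 = y" "Q2 *v x = x"
  proof (cases "q2 = y")
    case True then show ?thesis using that[of "mat 1"] by (simp add: orthogonal_matrix_id)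
  next
    case False
    have "q2 - y \<noteq> 0" using False by simp
    moreover have "inner (q2 - y) x = 0" using q2x assms(6) by (simp add: inner_diff_left inner_commute[of q2 x] inner_commute[of y x])
    ultimately show ?thesis using that[of "hrefl (q2 - y)"] orth_refl refl_swap[OF q2n assms(5) False] refl_fix
      by blast
  qed
  show ?thesis
  proof (intro exI conjI)
    show "orthogonal_matrix (Q2 ** Q1)" by (rule orthogonal_matrix_mul[OF Q2(1) Q1(1)])
    show "(Q2 ** Q1) *v q = x" using Q1 Q2 by (simp add: matrix_vector_mul_assoc[symmetric])
    show "(Q2 ** Q1) *v q' = y" using Q2 by (simp add: matrix_vector_mul_assoc[symmetric] q2_def[symmetric])
  qed
qed


lemma bl_conj: "bounded_linear (\<lambda>X::real^'n^'m. P ** X ** (R::real^'k^'n))"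
  unfolding linear_conv_bounded_linear[symmetric]
  by (rule linearI) (simp_all add: matrix_add_ldistrib mm_add_r mm_scale_l mm_scale_r)

lemma bl_quad: "bounded_linear (\<lambda>X::real^'n^'n. inner q (X *v q))"
  unfolding linear_conv_bounded_linear[symmetric]
  by (rule linearI) (simp_all add: matrix_vector_mult_add_rdistrib inner_add_right
      scaleR_matrix_vector_assoc[symmetric])

lemma mv_neg: "(M::real^'n^'m) *v (- v) = - (M *v v)"
  by (simp add: matrix_vector_mult_def vec_eq_iff sum_negf)

lemma sym_inner2:
  fixes A :: "real^'n^'n"
  assumes "transpose A = A"
  shows "inner x (A *v y) = inner (A *v x) y"
  using sym_inner[OF assms] by simp

context
  fixes \<mu> :: "(real^'p^'n) measure"
  assumes su: "stiefel_uniform \<mu>"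
begin

lemma L_inv:
  fixes h :: "real^'p^'n \<Rightarrow> 'b::{banach, second_countable_topology}"
  assumes Q: "orthogonal_matrix Q" and h: "continuous_on UNIV h"
  shows "(\<integral>U. h (Q ** U) \<partial>\<mu>) = (\<integral>U. h U \<partial>\<mu>)"
proof -
  have d: "distr \<mu> borel (\<lambda>U. Q ** U) = \<mu>" using su Q by (simp add: stiefel_uniform_def)
  have m: "(\<lambda>U. Q ** U) \<in> measurable \<mu> borel"
    by (rule su_meas[OF su]) (intro continuous_intros)
  have "(\<integral>U. h U \<partial>\<mu>) = (\<integral>U. h U \<partial>(distr \<mu> borel (\<lambda>U. Q ** U)))" by (simp add: d)
  also have "\<dots> = (\<integral>U. h (Q ** U) \<partial>\<mu>)"
    by (rule integral_distr[OF m borel_measurable_continuous_onI[OF h]])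
  finally show ?thesis by simp
qed

lemma L_lin:
  fixes F :: "real^'p^'n \<Rightarrow> real^'m^'m"
  assumes "continuous_on UNIV F"
  shows "(\<integral>U. P ** F U ** R \<partial>\<mu>) = P ** (\<integral>U. F U \<partial>\<mu>) ** (R::real^'m^'m)"
  by (rule integral_bounded_linear[OF bl_conj su_integrable[OF su assms]])

lemma L_quad:
  fixes F :: "real^'p^'n \<Rightarrow> real^'m^'m"
  assumes "continuous_on UNIV F"
  shows "(\<integral>U. inner q (F U *v q) \<partial>\<mu>) = inner q ((\<integral>U. F U \<partial>\<mu>) *v q)"
  by (rule integral_bounded_linear[OF bl_quad su_integrable[OF su assms]])

lemma ZA_pos: "(\<integral>V. etr (transpose V ** A ** V) \<partial>\<mu>) > 0"
  by (rule su_pos[OF su]) (intro continuous_intros, rule etr_pos)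

lemma bd_cont: "continuous_on UNIV (bingham_density \<mu> A)"
  unfolding bingham_density_def using ZA_pos[of A]
  by (intro continuous_intros) auto

lemma bd_pos: "bingham_density \<mu> A U > 0"
  unfolding bingham_density_def by (intro divide_pos_pos etr_pos ZA_pos)

lemma bd_inv:
  assumes "transpose Q ** A ** Q = A"
  shows "bingham_density \<mu> A (Q ** U) = bingham_density \<mu> A U"
proof -
  have "transpose (Q ** U) ** A ** (Q ** U) = transpose U ** (transpose Q ** A ** Q) ** U"
    by (simp add: matrix_transpose_mul matrix_mul_assoc)
  then show ?thesis unfolding bingham_density_def using assms by simp
qed

lemma E_conj:
  assumes Q: "orthogonal_matrix Q" and QA: "transpose Q ** A ** Q = A"
  shows "(\<integral>U. bingham_density \<mu> A U *\<^sub>R (U ** transpose U) \<partial>\<mu>) =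
     Q ** (\<integral>U. bingham_density \<mu> A U *\<^sub>R (U ** transpose U) \<partial>\<mu>) ** transpose Q"
proof -
  have c: "continuous_on UNIV (\<lambda>U. bingham_density \<mu> A U *\<^sub>R (U ** transpose U))"
    by (intro continuous_intros bd_cont)
  have "(\<integral>U. bingham_density \<mu> A U *\<^sub>R (U ** transpose U) \<partial>\<mu>) =
        (\<integral>U. bingham_density \<mu> A (Q ** U) *\<^sub>R ((Q ** U) ** transpose (Q ** U)) \<partial>\<mu>)"
    by (rule L_inv[OF Q c, symmetric])
  also have "\<dots> = (\<integral>U. Q ** (bingham_density \<mu> A U *\<^sub>R (U ** transpose U)) ** transpose Q \<partial>\<mu>)"
    by (simp add: bd_inv[OF QA] matrix_transpose_mul matrix_mul_assoc mm_scale_l mm_scale_r)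
  also have "\<dots> = Q ** (\<integral>U. bingham_density \<mu> A U *\<^sub>R (U ** transpose U) \<partial>\<mu>) ** transpose Q"
    by (rule L_lin[OF c])
  finally show ?thesis .
qed

lemma H1:
  fixes A :: "real^'n^'n"
  assumes sym: "transpose A = A" and x: "x \<noteq> 0" "A *v x = l *\<^sub>R x"
  defines "E \<equiv> (\<integral>U. bingham_density \<mu> A U *\<^sub>R (U ** transpose U) \<partial>\<mu>)"
  shows "\<exists>c. E *v x = c *\<^sub>R x"
proof -
  define H where "H = hrefl x"
  define k where "k = 2 / inner x x"
  have Hv: "H *v z = z - (k * inner x z) *\<^sub>R x" for z
    by (simp add: H_def refl_mv k_def)
  have HAH: "transpose H ** A ** H = A"
  proof (rule matrix_eq[THEN iffD2], intro allI)
    fix z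
    have xAz: "inner x (A *v z) = l * inner x z"
      using sym_inner2[OF sym, of x z] x(2) by simp
    have xx: "k * inner x x = 2" using x(1) by (simp add: k_def)
    have AHz: "A *v (H *v z) = A *v z - (k * inner x z * l) *\<^sub>R x"
      by (simp add: Hv matrix_vector_mult_diff_distrib matrix_vector_mult_scaleR x(2))
    have "inner x (A *v (H *v z)) = l * inner x z - k * inner x z * l * inner x x"
      unfolding AHz by (simp add: inner_diff_right xAz)
    also have "\<dots> = - l * inner x z" using xx by (simp add: algebra_simps)
    finally have e: "inner x (A *v (H *v z)) = - l * inner x z" .
    have "H *v (A *v (H *v z)) = A *v z"
      unfolding Hv[of "A *v (H *v z)"] e unfolding AHz by (simp add: algebra_simps)
    then show "(transpose H ** A ** H) *v z = A *v z"
      by (simp add: H_def transpose_refl matrix_vector_mul_assoc[symmetric])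
  qed
  have E: "E = H ** E ** transpose H"
    unfolding E_def by (rule E_conj[OF orth_refl[OF x(1), folded H_def] HAH])
  have Hx: "H *v x = - x"
  proof -
    have kk: "k * inner x x = 2" using x(1) by (simp add: k_def)
    have "H *v x = x - (k * inner x x) *\<^sub>R x" by (rule Hv)
    also have "\<dots> = x - 2 *\<^sub>R x" by (simp only: kk)
    also have "\<dots> = - x" by (simp add: scaleR_2)
    finally show ?thesis .
  qed
  define y where "y = E *v x"
  have "y = H *v (E *v (H *v x))"
    unfolding y_def by (subst E) (simp add: H_def transpose_refl matrix_vector_mul_assoc[symmetric])
  also have "\<dots> = - (H *v y)" by (simp add: Hx y_def mv_neg)
  finally have "y = - (y - (k * inner x y) *\<^sub>R x)" by (simp add: Hv)
  then have e2: "2 *\<^sub>R y = (k * inner x y) *\<^sub>R x" by (simp add: algebra_simps scaleR_2[symmetric])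
  have "y = (1/2) *\<^sub>R (2 *\<^sub>R y)" by simp
  also have "\<dots> = (1/2) *\<^sub>R ((k * inner x y) *\<^sub>R x)" by (simp only: e2)
  also have "\<dots> = ((k * inner x y) / 2) *\<^sub>R x" by simp
  finally have "y = ((k * inner x y) / 2) *\<^sub>R x" .
  then show ?thesis unfolding y_def by blast
qed

end


definition aq :: "real^'n \<Rightarrow> real^'p^'n \<Rightarrow> real" where
  "aq x U = inner x ((U ** transpose U) *v x)"

lemma trace_outer: "trace ((M::real^'n^'n) ** outer x x) = inner x (M *v x)"
  by (simp add: trace_def matrix_matrix_mult_def outer_def inner_vec_def matrix_vector_mult_def
      sum_distrib_left mult_ac)

lemma aq_trace: "trace (transpose U ** outer x x ** U) = aq x U"
proof -
  have "trace (transpose U ** outer x x ** U) = trace (U ** (transpose U ** outer x x))"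
    by (rule trace_mul_sym)
  also have "\<dots> = trace ((U ** transpose U) ** outer x x)" by (simp add: matrix_mul_assoc)
  also have "\<dots> = aq x U" by (simp add: trace_outer aq_def)
  finally show ?thesis .
qed

lemma aq_refl:
  fixes R :: "real^'n^'n"
  assumes "transpose R = R"
  shows "aq q (R ** U) = aq (R *v q) U"
proof -
  have eq: "(R ** U) ** transpose (R ** U) = R ** (U ** transpose U) ** R"
    using assms by (simp add: matrix_transpose_mul matrix_mul_assoc)
  have "aq q (R ** U) = inner q ((R ** (U ** transpose U) ** R) *v q)"
    by (simp only: aq_def eq)
  also have "(R ** (U ** transpose U) ** R) *v q = R *v ((U ** transpose U) *v (R *v q))"
    by (simp add: matrix_vector_mul_assoc matrix_mul_assoc)
  finally have "aq q (R ** U) = inner q (R *v ((U ** transpose U) *v (R *v q)))" .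
  also have "\<dots> = aq (R *v q) U" unfolding aq_def by (rule sym_inner2[OF assms])
  finally show ?thesis .
qed

lemma RAR:
  fixes A :: "real^'n^'n"
  assumes sym: "transpose A = A" and q: "norm q = 1" "norm q' = 1" "inner q q' = 0"
    and e: "A *v q = l *\<^sub>R q" "A *v q' = l' *\<^sub>R q'"
  shows "hrefl (q - q') ** A ** hrefl (q - q') = A - (l - l') *\<^sub>R (outer q q - outer q' q')"
proof (rule matrix_eq[THEN iffD2], intro allI)
  fix z
  define w where "w = q - q'"
  have qq: "inner q q = 1" "inner q' q' = 1" using q by (simp_all add: norm_eq_1)
  have ww: "inner w w = 2" using qq q(3) by (simp add: w_def inner_diff_left inner_diff_right inner_commute[of q' q])
  have Rv: "hrefl w *v y = y - inner w y *\<^sub>R w" for y by (simp add: refl_mv ww)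
  define s where "s = inner q z"
  define t where "t = inner q' z"
  have wz: "inner w z = s - t" by (simp add: w_def s_def t_def inner_diff_left)
  have Aw: "A *v w = l *\<^sub>R q - l' *\<^sub>R q'" by (simp add: w_def matrix_vector_mult_diff_distrib e)
  have wAz: "inner w (A *v z) = l * s - l' * t"
    using sym_inner2[OF sym, of w z] by (simp add: Aw inner_diff_left s_def t_def)
  have wAw: "inner w (A *v w) = l + l'"
    unfolding Aw using qq q(3) by (simp add: w_def inner_diff_left inner_diff_right inner_commute[of q' q])
  have ARz: "A *v (hrefl w *v z) = A *v z - (s - t) *\<^sub>R (l *\<^sub>R q - l' *\<^sub>R q')"
    by (simp add: Rv wz matrix_vector_mult_diff_distrib matrix_vector_mult_scaleR Aw)
  have wARz: "inner w (A *v (hrefl w *v z)) = l * t - l' * s"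
  proof -
    have "inner w (A *v (hrefl w *v z)) = inner w (A *v z) - (s - t) * inner w (A *v w)"
      unfolding ARz Aw[symmetric] by (simp add: inner_diff_right)
    also have "\<dots> = l * t - l' * s" by (simp add: wAz wAw algebra_simps)
    finally show ?thesis .
  qed
  have "hrefl w *v (A *v (hrefl w *v z)) = A *v z - (s - t) *\<^sub>R (l *\<^sub>R q - l' *\<^sub>R q') - (l * t - l' * s) *\<^sub>R w"
    using Rv[of "A *v (hrefl w *v z)"] unfolding wARz unfolding ARz .
  also have "\<dots> = A *v z - ((l - l') * s) *\<^sub>R q + ((l - l') * t) *\<^sub>R q'"
    by (simp add: algebra_simps w_def)
  also have "\<dots> = (A - (l - l') *\<^sub>R (outer q q - outer q' q')) *v z"
    by (simp add: matrix_vector_mult_diff_rdistrib scaleR_matrix_vector_assoc[symmetric] outer_mv s_def t_def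
        algebra_simps)
  finally show "(hrefl (q - q') ** A ** hrefl (q - q')) *v z = (A - (l - l') *\<^sub>R (outer q q - outer q' q')) *v z"
    by (simp add: matrix_vector_mul_assoc[symmetric] w_def)
qed


lemma sign_lemma:
  fixes c d :: real
  assumes "c \<ge> 0"
  shows "(1 - exp (- c * d)) * d \<ge> 0" and "c > 0 \<Longrightarrow> d \<noteq> 0 \<Longrightarrow> (1 - exp (- c * d)) * d > 0"
proof -
  show "(1 - exp (- c * d)) * d \<ge> 0"
  proof (cases "d \<ge> 0")
    case True
    then have "- c * d \<le> 0" using assms by (simp add: mult_nonneg_nonneg)
    then have "exp (- c * d) \<le> 1" by simp
    then show ?thesis using True by simp
  next
    case False
    then have "- c * d \<ge> 0" using assms by (simp add: mult_nonneg_nonpos)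
    then have "exp (- c * d) \<ge> 1" by simp
    then show ?thesis using False by (simp add: mult_nonpos_nonpos)
  qed
  assume c: "c > 0" and d: "d \<noteq> 0"
  show "(1 - exp (- c * d)) * d > 0"
  proof (cases "d > 0")
    case True
    then have "- c * d < 0" using c by simp
    then have "exp (- c * d) < 1" by simp
    then show ?thesis using True by simp
  next
    case False
    then have "d < 0" using d by simp
    then have "- c * d > 0" using c by (simp add: mult_pos_neg)
    then have "exp (- c * d) > 1" by simp
    then show ?thesis using \<open>d < 0\<close> by (simp add: mult_neg_neg)
  qed
qed

lemma refl_neg: "hrefl (- v) = hrefl (v::real^'n)"
proof -
  have "outer (-v) (-v) = outer v v" by (simp add: outer_def)
  then show ?thesis by (simp add: hrefl_def)
qed

lemma aq_scale: "inner x ((c *\<^sub>R (M::real^'n^'n)) *v x) = c * inner x (M *v x)"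
proof -
  have "(c *\<^sub>R M) *v x = c *\<^sub>R (M *v x)"
    by (simp add: matrix_vector_mult_def vec_eq_iff sum_distrib_left mult.assoc vector_scaleR_component real_scaleR_def)
  then show ?thesis by simp
qed

lemma cont_mv[continuous_intros]:
  fixes f :: "'a::topological_space \<Rightarrow> real^'m^'n"
  assumes "continuous_on S f"
  shows "continuous_on S (\<lambda>x. f x *v v)"
  unfolding matrix_vector_mult_def by (intro continuous_intros assms)

context
  fixes \<mu> :: "(real^'p^'n) measure"
  assumes su: "stiefel_uniform \<mu>"
begin

lemma aq_cont: "continuous_on UNIV (aq x)"
  unfolding aq_def by (intro continuous_intros)

lemma dq:
  "inner x ((\<integral>U. bingham_density \<mu> A U *\<^sub>R (U ** transpose U) \<partial>\<mu>) *v x) =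
   (\<integral>U. bingham_density \<mu> A U * aq x U \<partial>\<mu>)"
proof -
  have "(\<integral>U. inner x ((bingham_density \<mu> A U *\<^sub>R (U ** transpose U)) *v x) \<partial>\<mu>) =
        inner x ((\<integral>U. bingham_density \<mu> A U *\<^sub>R (U ** transpose U) \<partial>\<mu>) *v x)"
    by (rule L_quad[OF su]) (intro continuous_intros bd_cont[OF su])
  then show ?thesis by (simp add: aq_scale aq_def)
qed

lemma H23:
  fixes A :: "real^'n^'n"
  assumes sym: "transpose A = A" and q: "norm q = 1" "norm q' = 1" "inner q q' = 0"
    and e: "A *v q = l *\<^sub>R q" "A *v q' = l' *\<^sub>R q'" and ll: "l \<ge> l'"
    and nd: "\<not> (AE U in \<mu>. aq q U = aq q' U)"
  defines "E \<equiv> (\<integral>U. bingham_density \<mu> A U *\<^sub>R (U ** transpose U) \<partial>\<mu>)"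
  shows "inner q' (E *v q') \<le> inner q (E *v q) \<and> (l > l' \<longrightarrow> inner q' (E *v q') < inner q (E *v q))"
proof -
  let ?b = "bingham_density \<mu> A"
  define c where "c = l - l'"
  have c0: "c \<ge> 0" using ll by (simp add: c_def)
  define R where "R = hrefl (q - q')"
  have qq': "q \<noteq> q'"
  proof
    assume "q = q'" then have "inner q q = 0" using q(3) by simp
    then show False using q(1) by simp
  qed
  have RT: "transpose R = R" by (simp add: R_def transpose_refl)
  have Rq: "R *v q = q'" unfolding R_def by (rule refl_swap[OF q(1,2) qq'])
  have Rq': "R *v q' = q" unfolding R_def using refl_swap[OF q(2,1)] qq' refl_neg[of "q - q'"] by simp
  have RU: "aq x (R ** U) = aq (R *v x) U" for x U by (rule aq_refl[OF RT])
  define \<delta> where "\<delta> (U::real^'p^'n) = aq q U - aq q' U" for U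
  have bR: "?b (R ** U) = ?b U * exp (- c * \<delta> U)" for U
  proof -
    have "transpose (R ** U) ** A ** (R ** U) = transpose U ** (R ** A ** R) ** U"
      using RT by (simp add: matrix_transpose_mul matrix_mul_assoc)
    also have "R ** A ** R = A - c *\<^sub>R (outer q q - outer q' q')"
      unfolding R_def c_def by (rule RAR[OF sym q e])
    finally have "transpose (R ** U) ** A ** (R ** U) =
        transpose U ** A ** U - c *\<^sub>R (transpose U ** outer q q ** U - transpose U ** outer q' q' ** U)"
      by (simp add: matrix_add_ldistrib mm_diff_l mm_diff_r mm_scale_l mm_scale_r)
    then have t: "trace (transpose (R ** U) ** A ** (R ** U)) = trace (transpose U ** A ** U) + (- c * \<delta> U)"
      by (simp add: trace_sub trace_scale aq_trace \<delta>_def)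
    show ?thesis unfolding bingham_density_def etr_def t exp_add by simp
  qed
  have cb: "continuous_on UNIV ?b" by (rule bd_cont[OF su])
  have cd: "continuous_on UNIV \<delta>" unfolding \<delta>_def by (intro continuous_intros aq_cont)
  define f where "f (U::real^'p^'n) = ?b U * \<delta> U" for U
  define h where "h (U::real^'p^'n) = ?b U * exp (- c * \<delta> U) * \<delta> U" for U
  define g where "g (U::real^'p^'n) = ?b U * ((1 - exp (- c * \<delta> U)) * \<delta> U)" for U
  have cf: "continuous_on UNIV f" unfolding f_def by (intro continuous_intros cb cd)
  have ch: "continuous_on UNIV h" unfolding h_def by (intro continuous_intros cb cd)
  have cg: "continuous_on UNIV g" unfolding g_def by (intro continuous_intros cb cd)
  have iq: "integrable \<mu> (\<lambda>U. ?b U * aq x U)" for x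
    by (rule su_integrable[OF su]) (intro continuous_intros cb aq_cont)
  have D: "inner q (E *v q) - inner q' (E *v q') = (\<integral>U. f U \<partial>\<mu>)"
  proof -
    have "(\<integral>U. f U \<partial>\<mu>) = (\<integral>U. ?b U * aq q U - ?b U * aq q' U \<partial>\<mu>)"
      unfolding f_def \<delta>_def by (simp add: right_diff_distrib)
    also have "\<dots> = (\<integral>U. ?b U * aq q U \<partial>\<mu>) - (\<integral>U. ?b U * aq q' U \<partial>\<mu>)"
      by (rule Bochner_Integration.integral_diff[OF iq iq])
    finally show ?thesis unfolding E_def dq by simp
  qed
  have "(\<integral>U. f (R ** U) \<partial>\<mu>) = (\<integral>U. f U \<partial>\<mu>)"
    by (rule L_inv[OF su _ cf]) (simp add: R_def orth_refl qq')
  then have "(\<integral>U. f U \<partial>\<mu>) = (\<integral>U. f (R ** U) \<partial>\<mu>)" by simp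
  also have "\<dots> = (\<integral>U. - h U \<partial>\<mu>)"
  proof (rule Bochner_Integration.integral_cong[OF refl])
    fix U assume "U \<in> space \<mu>"
    have "\<delta> (R ** U) = - \<delta> U" by (simp add: \<delta>_def RU Rq Rq')
    then show "f (R ** U) = - h U" by (simp add: f_def h_def bR)
  qed
  also have "\<dots> = - (\<integral>U. h U \<partial>\<mu>)" by simp
  finally have fh: "(\<integral>U. f U \<partial>\<mu>) = - (\<integral>U. h U \<partial>\<mu>)" .
  have "(\<integral>U. g U \<partial>\<mu>) = (\<integral>U. f U - h U \<partial>\<mu>)"
    by (rule Bochner_Integration.integral_cong[OF refl]) (simp add: f_def g_def h_def algebra_simps)
  also have "\<dots> = (\<integral>U. f U \<partial>\<mu>) - (\<integral>U. h U \<partial>\<mu>)"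
    by (rule Bochner_Integration.integral_diff[OF su_integrable[OF su cf] su_integrable[OF su ch]])
  finally have g2: "(\<integral>U. g U \<partial>\<mu>) = 2 * (inner q (E *v q) - inner q' (E *v q'))"
    using fh D by simp
  have gnn: "g U \<ge> 0" for U
    unfolding g_def using bd_pos[OF su, of A U] sign_lemma(1)[OF c0, of "\<delta> U"] by (metis mult_nonneg_nonneg less_imp_le)
  have ig: "integrable \<mu> g" by (rule su_integrable[OF su cg])
  have "(\<integral>U. g U \<partial>\<mu>) \<ge> 0" using gnn by (simp add: integral_nonneg)
  then have le: "inner q' (E *v q') \<le> inner q (E *v q)" using g2 by simp
  moreover have "inner q' (E *v q') < inner q (E *v q)" if "l > l'"
  proof (rule ccontr)
    assume "\<not> ?thesis"
    then have "(\<integral>U. g U \<partial>\<mu>) = 0" using le g2 by simp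
    then have "AE U in \<mu>. g U = 0" using integral_nonneg_eq_0_iff_AE[OF ig] gnn by simp
    then have "AE U in \<mu>. aq q U = aq q' U"
    proof (rule eventually_mono)
      fix U assume g0: "g U = 0"
      show "aq q U = aq q' U"
      proof (rule ccontr)
        assume "aq q U \<noteq> aq q' U"
        then have "\<delta> U \<noteq> 0" by (simp add: \<delta>_def)
        moreover have "c > 0" using that by (simp add: c_def)
        ultimately have "(1 - exp (- c * \<delta> U)) * \<delta> U > 0" using sign_lemma(2)[OF c0] by blast
        then have "g U > 0" unfolding g_def using bd_pos[OF su, of A U] by (metis mult_pos_pos)
        then show False using g0 by simp
      qed
    qed
    then show False using nd by simp
  qed
  ultimately show ?thesis by blast
qed

end


lemma ax_M: "inner (axis k 1) ((M::real^'n^'n) *v axis l 1) = M $ k $ l"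
  by (simp add: matrix_vector_mult_basis inner_axis' column_def)

lemma UUT_sym: "transpose (U ** transpose U) = (U ** transpose (U::real^'p^'n))"
  by (simp add: matrix_transpose_mul)

lemma aq_pm:
  fixes U :: "real^'p^'n"
  shows "aq (axis k 1 + axis l 1) U - aq (axis k 1 - axis l 1) U = 4 * (U ** transpose U) $ k $ l"
proof -
  define M where "M = U ** transpose U"
  have s: "M $ l $ k = M $ k $ l"
  proof -
    have "transpose M $ k $ l = M $ k $ l" by (simp add: M_def UUT_sym)
    then show ?thesis by (simp add: transpose_def)
  qed
  have "aq (axis k 1 + axis l 1) U - aq (axis k 1 - axis l 1) U =
     2 * inner (axis k 1) (M *v axis l 1) + 2 * inner (axis l 1) (M *v axis k 1)"
    by (simp add: aq_def M_def[symmetric] matrix_vector_right_distrib matrix_vector_mult_diff_distrib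
        inner_add_left inner_add_right inner_diff_left inner_diff_right)
  also have "\<dots> = 4 * M $ k $ l" by (simp add: ax_M s)
  finally show ?thesis by (simp add: M_def)
qed

lemma aq_ax: "aq (axis k 1) U = (U ** transpose U) $ k $ k"
  by (simp add: aq_def ax_M)

lemma contra:
  fixes U :: "real^'p^'n"
  assumes U: "transpose U ** U = mat 1" and pn: "CARD('p) < CARD('n)"
    and h1: "\<And>k l. aq (axis k 1) U = aq (axis l 1) U"
    and h2: "\<And>k l. k \<noteq> l \<Longrightarrow> aq (axis k 1 + axis l 1) U = aq (axis k 1 - axis l 1) U"
  shows False
proof -
  define M where "M = U ** transpose U"
  obtain k0 :: 'n where True by blast
  define t where "t = M $ k0 $ k0"
  have Mt: "M = t *\<^sub>R mat 1"
  proof -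
    have "M $ k $ l = (t *\<^sub>R mat 1 :: real^'n^'n) $ k $ l" for k l
    proof (cases "k = l")
      case True
      then show ?thesis using h1[of k k0] by (simp add: aq_ax M_def t_def mat_def)
    next
      case False
      then show ?thesis using h2[OF False] aq_pm[of k l U] by (simp add: M_def mat_def)
    qed
    then show ?thesis by (simp add: vec_eq_iff)
  qed
  have "trace M = trace (transpose U ** U)" unfolding M_def by (rule trace_mul_sym)
  then have tr: "t * real CARD('n) = real CARD('p)"
    using U by (simp add: Mt trace_I trace_scale)
  have "M ** M = U ** (transpose U ** U) ** transpose U" by (simp add: M_def matrix_mul_assoc)
  then have "M ** M = M" using U by (simp add: M_def)
  then have "(t * t) *\<^sub>R (mat 1 :: real^'n^'n) = t *\<^sub>R mat 1"
    by (simp add: Mt mm_scale_l mm_scale_r)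
  then have "(t * t) * ((mat 1 :: real^'n^'n) $ k0 $ k0) = t * ((mat 1 :: real^'n^'n) $ k0 $ k0)"
    by (metis vector_scaleR_component real_scaleR_def)
  then have "t * t = t" by (simp add: mat_def)
  then have "t = 0 \<or> t = 1" by (metis mult_cancel_left2 mult_eq_0_iff)
  moreover have "CARD('p) > 0" by simp
  ultimately show False using tr pn by auto
qed


lemma aq_orth: "aq x ((Q::real^'n^'n) ** U) = aq (transpose Q *v x) U"
proof -
  have eq: "(Q ** U) ** transpose (Q ** U) = Q ** (U ** transpose U) ** transpose Q"
    by (simp add: matrix_transpose_mul matrix_mul_assoc)
  have "aq x (Q ** U) = inner x ((Q ** (U ** transpose U) ** transpose Q) *v x)"
    by (simp only: aq_def eq)
  also have "(Q ** (U ** transpose U) ** transpose Q) *v x = Q *v ((U ** transpose U) *v (transpose Q *v x))"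
    by (simp only: matrix_vector_mul_assoc matrix_mul_assoc)
  also have "inner x (Q *v ((U ** transpose U) *v (transpose Q *v x))) = aq (transpose Q *v x) U"
    unfolding aq_def by (metis dot_lmul_matrix transpose_matrix_vector transpose_transpose)
  finally show ?thesis .
qed

lemma aq_smult: "aq (s *\<^sub>R x) U = s\<^sup>2 * aq x U"
  by (simp add: aq_def matrix_vector_mult_scaleR power2_eq_square)

context
  fixes \<mu> :: "(real^'p^'n) measure"
  assumes su: "stiefel_uniform \<mu>"
begin

lemma AE_pair:
  fixes q q' x y :: "real^'n"
  assumes q: "norm q = 1" "norm q' = 1" "inner q q' = 0"
    and xy: "norm x = 1" "norm y = 1" "inner x y = 0"
    and ae: "AE U in \<mu>. aq q U = aq q' U"
  shows "AE U in \<mu>. aq x U = aq y U"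
proof -
  obtain Q where Q: "orthogonal_matrix Q" "Q *v q = x" "Q *v q' = y"
    using orth_map[OF q xy] by blast
  have QQ: "transpose Q ** Q = mat 1" using Q(1) by (simp add: orthogonal_matrix_def)
  have Tx: "transpose Q *v x = q" unfolding Q(2)[symmetric] matrix_vector_mul_assoc QQ by simp
  have Ty: "transpose Q *v y = q'" unfolding Q(3)[symmetric] matrix_vector_mul_assoc QQ by simp
  define sq where "sq a b (U::real^'p^'n) = (aq a U - aq b U)\<^sup>2" for a b U
  have csq: "continuous_on UNIV (sq a b)" for a b unfolding sq_def
    by (intro continuous_intros aq_cont[OF su])
  have "(\<integral>U. sq q q' U \<partial>\<mu>) = (\<integral>U. 0 \<partial>\<mu>)"
    by (rule integral_cong_AE[OF su_meas[OF su csq]]) (simp, use ae in \<open>simp add: sq_def\<close>)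
  then have z: "(\<integral>U. sq q q' U \<partial>\<mu>) = 0" by simp
  have "(\<integral>U. sq x y U \<partial>\<mu>) = (\<integral>U. sq x y (Q ** U) \<partial>\<mu>)"
    by (rule L_inv[OF su Q(1) csq, symmetric])
  also have "\<dots> = (\<integral>U. sq q q' U \<partial>\<mu>)" by (simp only: sq_def aq_orth Tx Ty)
  finally have "(\<integral>U. sq x y U \<partial>\<mu>) = 0" using z by simp
  moreover have nn: "AE U in \<mu>. 0 \<le> sq x y U" by (simp add: sq_def)
  ultimately have "AE U in \<mu>. sq x y U = 0"
    using integral_nonneg_eq_0_iff_AE[OF su_integrable[OF su csq[of x y]] nn] by simp
  then show ?thesis by eventually_elim (simp add: sq_def)
qed

lemma ND:
  fixes q q' :: "real^'n"
  assumes pn: "CARD('p) < CARD('n)" and q: "norm q = 1" "norm q' = 1" "inner q q' = 0"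
  shows "\<not> (AE U in \<mu>. aq q U = aq q' U)"
proof
  assume ae: "AE U in \<mu>. aq q U = aq q' U"
  have ax: "norm (axis k 1 :: real^'n) = 1" for k by simp
  have h1: "AE U in \<mu>. aq (axis k 1) U = aq (axis l 1) U" for k l :: 'n
  proof (cases "k = l")
    case True then show ?thesis by simp
  next
    case False
    then show ?thesis by (intro AE_pair[OF q ax ax _ ae]) (simp add: inner_axis_axis)
  qed
  have h2: "AE U in \<mu>. k \<noteq> l \<longrightarrow> aq (axis k 1 + axis l 1) U = aq (axis k 1 - axis l 1) U" for k l :: 'n
  proof (cases "k = l")
    case True then show ?thesis by simp
  next
    case False
    define s where "s = 1 / sqrt 2"
    have s2: "s\<^sup>2 = 1 / 2" by (simp add: s_def power_divide)
    define u where "u = s *\<^sub>R (axis k 1 + axis l 1 :: real^'n)"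
    define v where "v = s *\<^sub>R (axis k 1 - axis l 1 :: real^'n)"
    have a1: "inner (axis k 1 + axis l 1) (axis k 1 + axis l 1 :: real^'n) = 2"
      using False by (simp add: inner_add_left inner_add_right inner_axis_axis)
    have a2: "inner (axis k 1 - axis l 1) (axis k 1 - axis l 1 :: real^'n) = 2"
      using False by (simp add: inner_diff_left inner_diff_right inner_axis_axis)
    have a3: "inner (axis k 1 + axis l 1) (axis k 1 - axis l 1 :: real^'n) = 0"
      using False by (simp add: inner_add_left inner_diff_right inner_axis_axis)
    have uu: "inner u u = 1"
    proof -
      have "inner u u = s\<^sup>2 * inner (axis k 1 + axis l 1) (axis k 1 + axis l 1 :: real^'n)"
        by (simp add: u_def power2_eq_square)
      then show ?thesis using a1 s2 by simp
    qed
    have vv: "inner v v = 1"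
    proof -
      have "inner v v = s\<^sup>2 * inner (axis k 1 - axis l 1) (axis k 1 - axis l 1 :: real^'n)"
        by (simp add: v_def power2_eq_square)
      then show ?thesis using a2 s2 by simp
    qed
    have uv: "inner u v = 0"
    proof -
      have "inner u v = s\<^sup>2 * inner (axis k 1 + axis l 1) (axis k 1 - axis l 1 :: real^'n)"
        by (simp only: u_def v_def power2_eq_square inner_scaleR_left inner_scaleR_right mult.assoc)
      then show ?thesis using a3 by simp
    qed
    have "AE U in \<mu>. aq u U = aq v U"
      using uu vv uv by (intro AE_pair[OF q _ _ _ ae]) (simp_all add: norm_eq_1)
    then show ?thesis
    proof (rule eventually_mono)
      fix U assume "aq u U = aq v U"
      then have "s\<^sup>2 * aq (axis k 1 + axis l 1) U = s\<^sup>2 * aq (axis k 1 - axis l 1) U"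
        by (simp only: u_def v_def aq_smult)
      then show "k \<noteq> l \<longrightarrow> aq (axis k 1 + axis l 1) U = aq (axis k 1 - axis l 1) U" using s2 by simp
    qed
  qed
  have AEP: "AE U in \<mu>. U \<in> stiefel \<and> (\<forall>kl::'n \<times> 'n. aq (axis (fst kl) 1) U = aq (axis (snd kl) 1) U \<and>
     (fst kl \<noteq> snd kl \<longrightarrow> aq (axis (fst kl) 1 + axis (snd kl) 1) U = aq (axis (fst kl) 1 - axis (snd kl) 1) U))"
  proof -
    have "\<forall>kl::'n \<times> 'n. AE U in \<mu>. aq (axis (fst kl) 1) U = aq (axis (snd kl) 1) U \<and>
     (fst kl \<noteq> snd kl \<longrightarrow> aq (axis (fst kl) 1 + axis (snd kl) 1) U = aq (axis (fst kl) 1 - axis (snd kl) 1) U)"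
    proof
      fix kl :: "'n \<times> 'n"
      show "AE U in \<mu>. aq (axis (fst kl) 1) U = aq (axis (snd kl) 1) U \<and>
       (fst kl \<noteq> snd kl \<longrightarrow> aq (axis (fst kl) 1 + axis (snd kl) 1) U = aq (axis (fst kl) 1 - axis (snd kl) 1) U)"
        using h1[of "fst kl" "snd kl"] h2[of "fst kl" "snd kl"] by eventually_elim (rule conjI)
    qed
    then have "AE U in \<mu>. \<forall>kl::'n \<times> 'n. aq (axis (fst kl) 1) U = aq (axis (snd kl) 1) U \<and>
     (fst kl \<noteq> snd kl \<longrightarrow> aq (axis (fst kl) 1 + axis (snd kl) 1) U = aq (axis (fst kl) 1 - axis (snd kl) 1) U)"
      by (subst AE_all_countable)
    with su_AE[OF su] show ?thesis by eventually_elim (rule conjI)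
  qed
  have nF: "\<not> (AE U in \<mu>. False)" by (rule su_AE_False[OF su])
  obtain U :: "real^'p^'n" where U: "U \<in> stiefel" and
    hh: "\<forall>kl::'n \<times> 'n. aq (axis (fst kl) 1) U = aq (axis (snd kl) 1) U \<and>
     (fst kl \<noteq> snd kl \<longrightarrow> aq (axis (fst kl) 1 + axis (snd kl) 1) U = aq (axis (fst kl) 1 - axis (snd kl) 1) U)"
  proof -
    assume r: "\<And>U::real^'p^'n. U \<in> stiefel \<Longrightarrow> (\<forall>kl::'n \<times> 'n. aq (axis (fst kl) 1) U = aq (axis (snd kl) 1) U \<and>
     (fst kl \<noteq> snd kl \<longrightarrow> aq (axis (fst kl) 1 + axis (snd kl) 1) U = aq (axis (fst kl) 1 - axis (snd kl) 1) U)) \<Longrightarrow> thesis"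
    show thesis
    proof (rule ccontr)
      assume "\<not> thesis"
      have "AE U in \<mu>. False" using AEP
      proof (rule eventually_mono)
        fix U :: "real^'p^'n"
        assume "U \<in> stiefel \<and> (\<forall>kl::'n \<times> 'n. aq (axis (fst kl) 1) U = aq (axis (snd kl) 1) U \<and>
          (fst kl \<noteq> snd kl \<longrightarrow> aq (axis (fst kl) 1 + axis (snd kl) 1) U = aq (axis (fst kl) 1 - axis (snd kl) 1) U))"
        then show False using r \<open>\<not> thesis\<close> by blast
      qed
      then show False using nF by simp
    qed
  qed
  have UU: "transpose U ** U = mat 1" using U by (simp add: stiefel_def)
  have hh1: "\<And>k l. aq (axis k 1) U = aq (axis l 1) U" using hh by auto
  have hh2: "\<And>k l. k \<noteq> l \<Longrightarrow> aq (axis k 1 + axis l 1) U = aq (axis k 1 - axis l 1) U"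
    using hh by auto
  show False by (rule contra[where U=U]) (use UU pn hh1 hh2 in auto)
qed

end


lemma transpose_add: "transpose ((X::real^'n^'m) + Y) = transpose X + transpose Y"
  by (simp add: transpose_def vec_eq_iff)

lemma post_meas:
  fixes \<mu> :: "(real^'p^'n) measure" and M :: "real^'n^'n" and Y :: "real^'k^'n"
  assumes su: "stiefel_uniform \<mu>" and sig: "\<sigma> > 0"
  shows "posterior_density \<mu> (bingham_density \<mu> M) \<sigma> Y \<in> borel_measurable \<mu>"
proof -
  have "bingham_density \<mu> M \<in> borel_measurable \<mu>" by (rule su_meas[OF su bd_cont[OF su]])
  moreover have "marginal_likelihood \<sigma> Y \<in> borel_measurable \<mu>"
    using marg_meas[of \<sigma> Y] sig by (simp only: measurable_cong_sets[OF su_sets[OF su] refl]) simp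
  ultimately show ?thesis unfolding posterior_density_def by measurable
qed

theorem mainTheorem2:
  fixes \<mu> :: "(real^'p^'n) measure"
    and Ubar :: "real^'p^'n"
    and Y :: "real^'k^'n"
    and \<kappa> \<sigma> :: real
  assumes "CARD('p) < CARD('n)"
    and "stiefel_uniform \<mu>"
    and "\<kappa> > 0"
    and "transpose Ubar ** Ubar = mat 1"
    and "\<sigma> > 0"
  defines "prior \<equiv> bingham_density \<mu> (\<kappa> *\<^sub>R (Ubar ** transpose Ubar))"
    and "A \<equiv> \<kappa> *\<^sub>R (Ubar ** transpose Ubar) + (1 / (2 * \<sigma>\<^sup>2)) *\<^sub>R (Y ** transpose Y)"
  shows "(\<forall>U \<in> stiefel. posterior_density \<mu> prior \<sigma> Y U = bingham_density \<mu> A U)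
       \<and> (\<forall>V::real^'p^'n. top_eigvecs (posterior_mean_proj \<mu> prior \<sigma> Y) V \<longleftrightarrow> top_eigvecs A V)"
proof
  note pn = assms(1) and su = assms(2) and sig = assms(5)
  show P1: "\<forall>U \<in> stiefel. posterior_density \<mu> prior \<sigma> Y U = bingham_density \<mu> A U"
    unfolding prior_def A_def by (rule part1[OF su sig])
  have sym: "transpose A = A"
    unfolding A_def by (simp add: transpose_add transpose_scalar matrix_transpose_mul)
  define E where "E = (\<integral>U. bingham_density \<mu> A U *\<^sub>R (U ** transpose U) \<partial>\<mu>)"
  have PE: "posterior_mean_proj \<mu> prior \<sigma> Y = E"
    unfolding posterior_mean_proj_def E_def
  proof (rule integral_cong_AE)
    show "(\<lambda>U. posterior_density \<mu> prior \<sigma> Y U *\<^sub>R (U ** transpose U)) \<in> borel_measurable \<mu>"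
    proof -
      have "posterior_density \<mu> prior \<sigma> Y \<in> borel_measurable \<mu>"
        unfolding prior_def by (rule post_meas[OF su sig])
      moreover have "(\<lambda>U. U ** transpose U) \<in> borel_measurable \<mu>"
        by (rule su_meas[OF su]) (intro continuous_intros)
      ultimately show ?thesis by measurable
    qed
    show "(\<lambda>U. bingham_density \<mu> A U *\<^sub>R (U ** transpose U)) \<in> borel_measurable \<mu>"
      by (rule su_meas[OF su]) (intro continuous_intros bd_cont[OF su])
    show "AE U in \<mu>. posterior_density \<mu> prior \<sigma> Y U *\<^sub>R (U ** transpose U) =
                      bingham_density \<mu> A U *\<^sub>R (U ** transpose U)"
      using su_AE[OF su] by eventually_elim (simp add: P1)
  qed
  show "\<forall>V::real^'p^'n. top_eigvecs (posterior_mean_proj \<mu> prior \<sigma> Y) V \<longleftrightarrow> top_eigvecs A V"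
  proof
    fix V :: "real^'p^'n"
    show "top_eigvecs (posterior_mean_proj \<mu> prior \<sigma> Y) V \<longleftrightarrow> top_eigvecs A V"
      unfolding PE
    proof (rule fin[OF sym])
      fix x l assume "x \<noteq> 0" "A *v x = l *\<^sub>R x"
      then show "\<exists>c. E *v x = c *\<^sub>R x" unfolding E_def by (rule H1[OF su sym])
    next
      fix q q' :: "real^'n" and l l'
      assume q: "norm q = 1" "norm q' = 1" "inner q q' = 0" and e: "A *v q = l *\<^sub>R q" "A *v q' = l' *\<^sub>R q'"
        and ll: "l' \<le> l"
      show "inner q' (E *v q') \<le> inner q (E *v q)"
        using H23[OF su sym q e ll ND[OF su pn q]] unfolding E_def by blast
    next
      fix q q' :: "real^'n" and l l'
      assume q: "norm q = 1" "norm q' = 1" "inner q q' = 0" and e: "A *v q = l *\<^sub>R q" "A *v q' = l' *\<^sub>R q'"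
        and ll: "l' < l"
      show "inner q' (E *v q') < inner q (E *v q)"
        using H23[OF su sym q e less_imp_le[OF ll] ND[OF su pn q]] ll unfolding E_def by blast
    qed
  qed
qed


end
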